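(* (Completeness) Let $\mathfrak M=(\mathfrak T,\mathcal V)$ be a TFL model and $\phi$ a TFL formula in positive normal form, and let $H_0=(\mathfrak X(s_0),t_\epsilon)$ be the initial process. If $H_0\in[\![\phi]\!]^{\mathfrak T}_{\mathcal V}$, then Eve has a winning strategy in the model-checking game $\mathcal G(H_0,\phi)$.
   Context: Systems: $\mathfrak T=(S,s_0,T,I,\Sigma)$, a transition system with independence (states $S$, initial $s_0$, labels $\Sigma$, transitions $T\subseteq S\times\Sigma\times S$, irreflexive symmetric independence $I\subseteq T\times T$ satisfying the standard TSI axioms), image-finite. For $t=(s,a,s')$: $\sigma(t)=s,\tau(t)=s',\delta(t)=a$. $t\otimes t'$ iff $\sigma(t)=\sigma(t')\wedge tIt'$; $t\ominus t'$ iff $\tau(t)=\sigma(t')\wedge tIt'$; $t\le t'$ iff $\tau(t)=\sigma(t')\wedge\neg tIt'$. $\mathfrak X(s)$ = transitions with source $s$; conflict-free set = set with common source, pairwise $\otimes$; support sets = the $\mathfrak X(s)$ and non-empty conflict-free sets; $M\sqsubseteq R$ iff $M\subseteq R$ and no $t\in R\setminus M$ has $t\otimes t'$ for all $t'\in M$; $\mathcal X$ = all $\mathfrak X(s)$ and all support sets $M\sqsubseteq\mathfrak X(s)$; $\mathfrak A=T\cup\{t_\epsilon\}$ with fresh $t_\epsilon$, $\tau(t_\epsilon)=s_0$, $t_\epsilon\le t$ whenever $\sigma(t)=s_0$, never $t_\epsilon\ominus t$; processes $\mathfrak S=\mathcal X\times\mathfrak A$. TFL: formulas $\phi::=Z\mid\neg\phi\mid\phi\wedge\phi\mid\langle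 a\rangle_c\phi\mid\langle a\rangle_{nc}\phi\mid\langle\otimes\rangle\phi\mid\mu Z.\phi$ (free occurrences of $Z$ in $\mu Z.\phi$ under an even number of negations), with duals $\vee$, $[a]_c=\neg\langle a\rangle_c\neg$, $[a]_{nc}$, $[\otimes]=\neg\langle\otimes\rangle\neg$, $\nu Z.\phi=\neg\mu Z.\neg\phi[\neg Z/Z]$. A model is $(\mathfrak T,\mathcal V)$ with $\mathcal V:\mathrm{Var}\to2^{\mathfrak S}$. Semantics in $2^{\mathfrak S}$: $[\![Z]\!]=\mathcal V(Z)$, $\neg$ complement, $\wedge$ intersection, $[\![\langle a\rangle_c\phi]\!]=\{(R,t):\exists r\in R.\ \delta(r)=a,\ t\le r,\ (\mathfrak X(\tau(r)),r)\in[\![\phi]\!]\}$, $\langle a\rangle_{nc}$ likewise with $t\ominus r$, $[\![\langle\otimes\rangle\phi]\!]=\{(R,t):\exists M\in\mathcal X.\ M\sqsubseteq R,\ (M,t)\in[\![\phi]\!]\}$, $[\![\mu Z.\phi]\!]_{\mathcal V}=\bigcap\{Q\subseteq\mathfrak S:[\![\phi]\!]_{\mathcal V[Z:=Q]}\subseteq Q\}$. Positive normal form: negation only on variables, no two binders bind the same variable. $Sub(\phi)$ is the set of subformulas. Model-checking game $\mathcal G(H_0,\phi)$ between Eve and Adam: configurations $H\vdash\psi$ with $H\in\mathfrak S$, $\psi\in Sub(\phi)$; start $H_0\vdash\phi$. Rules: $H\vdash\mu Z.\psi$ or $H\vdash\nu Z.\psi$ moves to $H\vdash Z$; $H\vdash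 Z$ with $Z$ bound by $\mu Z.\psi$ or $\nu Z.\psi$ moves to $H\vdash\psi$; at $H\vdash\psi_0\vee\psi_1$ Eve (at $\wedge$, Adam) chooses $H\vdash\psi_i$; at $(R,t)\vdash\langle a\rangle_c\psi$ Eve (at $[a]_c\psi$, Adam) chooses $r\in R$ with $\delta(r)=a$, $t\le r$, moving to $(\mathfrak X(\tau(r)),r)\vdash\psi$; same for $\langle a\rangle_{nc}$/$[a]_{nc}$ with $t\ominus r$; at $(R,t)\vdash\langle\otimes\rangle\psi$ Eve (at $[\otimes]\psi$, Adam) chooses $M\in\mathcal X$ with $M\sqsubseteq R$, moving to $(M,t)\vdash\psi$. Adam wins a play iff it ends at $H\vdash Z$ ($Z$ free) with $H\notin\mathcal V(Z)$, or at a diamond configuration ($\langle a\rangle_c$, $\langle a\rangle_{nc}$, $\langle\otimes\rangle$) with no available choice, or is infinite and the syntactically outermost variable occurring infinitely often is bound by a $\mu$; Eve wins dually (ends at $H\vdash Z$ with $H\in\mathcal V(Z)$, at a box configuration with no available choice, or infinite with the outermost infinitely-often variable bound by a $\nu$). A player has a winning strategy if she/he can guarantee winning every play. *)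

theory Defs
  imports Main
begin

type_synonym ('s,'a) trans = "'s \<times> 'a \<times> 's"

record ('s,'a) tsi =
  states :: "'s set"
  init   :: 's
  trans  :: "('s,'a) trans set"
  indep  :: "(('s,'a) trans \<times> ('s,'a) trans) set"
  labels :: "'a set"

definition src :: "('s,'a) trans \<Rightarrow> 's" where "src t = fst t"
definition lab :: "('s,'a) trans \<Rightarrow> 'a" where "lab t = fst (snd t)"
definition tgt :: "('s,'a) trans \<Rightarrow> 's" where "tgt t = snd (snd t)"

text \<open>The relation used in the fourth TSI axiom: (s,a,s1) and (s2,a,u) are opposite sides
  of an independence square.\<close>
definition square :: "('s,'a) tsi \<Rightarrow> (('s,'a) trans \<times> ('s,'a) trans) set" where
  "square M = {((s,a,s1),(s2,a',u)) | s a s1 s2 a' u. a' = a \<and>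
      (\<exists>b. ((s,a,s1),(s,b,s2)) \<in> indep M \<and> ((s,a,s1),(s1,b,u)) \<in> indep M
         \<and> ((s,b,s2),(s2,a,u)) \<in> indep M)}"

definition is_tsi :: "('s,'a) tsi \<Rightarrow> bool" where
  "is_tsi M \<longleftrightarrow>
     init M \<in> states M \<and>
     trans M \<subseteq> states M \<times> labels M \<times> states M \<and>
     indep M \<subseteq> trans M \<times> trans M \<and>
     irrefl (indep M) \<and> sym (indep M) \<and>
     (\<forall>s a s' s''. (s,a,s') \<in> trans M \<longrightarrow> (s,a,s'') \<in> trans M \<longrightarrow> s' = s'') \<and>
     (\<forall>s a s1 b s2. ((s,a,s1),(s,b,s2)) \<in> indep M \<longrightarrow>
        (\<exists>u. ((s,a,s1),(s1,b,u)) \<in> indep M \<and> ((s,b,s2),(s2,a,u)) \<in> indep M)) \<and>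
     (\<forall>s a s1 b u. ((s,a,s1),(s1,b,u)) \<in> indep M \<longrightarrow>
        (\<exists>s2. ((s,a,s1),(s,b,s2)) \<in> indep M \<and> ((s,b,s2),(s2,a,u)) \<in> indep M)) \<and>
     (\<forall>t t' w. (t,t') \<in> (square M \<union> (square M)\<inverse>)\<^sup>* \<longrightarrow> (t',w) \<in> indep M \<longrightarrow> (t,w) \<in> indep M)"

definition image_finite :: "('s,'a) tsi \<Rightarrow> bool" where
  "image_finite M \<longleftrightarrow> (\<forall>s a. finite {s'. (s,a,s') \<in> trans M})"

datatype ('s,'a) act = Eps | Tr "('s,'a) trans"

type_synonym ('s,'a) proc = "('s,'a) trans set \<times> ('s,'a) act"

definition otimes :: "('s,'a) tsi \<Rightarrow> ('s,'a) trans \<Rightarrow> ('s,'a) trans \<Rightarrow> bool" where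
  "otimes M t t' \<longleftrightarrow> src t = src t' \<and> (t,t') \<in> indep M"

text \<open>t \<le> r and t \<ominus> r, for t a transition or the fresh initial transition Eps.\<close>
fun le_c :: "('s,'a) tsi \<Rightarrow> ('s,'a) act \<Rightarrow> ('s,'a) trans \<Rightarrow> bool" where
  "le_c M Eps r \<longleftrightarrow> src r = init M"
| "le_c M (Tr t) r \<longleftrightarrow> tgt t = src r \<and> (t,r) \<notin> indep M"

fun ominus :: "('s,'a) tsi \<Rightarrow> ('s,'a) act \<Rightarrow> ('s,'a) trans \<Rightarrow> bool" where
  "ominus M Eps r \<longleftrightarrow> False"
| "ominus M (Tr t) r \<longleftrightarrow> tgt t = src r \<and> (t,r) \<in> indep M"

definition Xs :: "('s,'a) tsi \<Rightarrow> 's \<Rightarrow> ('s,'a) trans set" where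
  "Xs M s = {t \<in> trans M. src t = s}"

definition conflict_free :: "('s,'a) tsi \<Rightarrow> ('s,'a) trans set \<Rightarrow> bool" where
  "conflict_free M N \<longleftrightarrow> N \<subseteq> trans M \<and> (\<exists>s. \<forall>t\<in>N. src t = s) \<and>
     (\<forall>t\<in>N. \<forall>t'\<in>N. t \<noteq> t' \<longrightarrow> otimes M t t')"

definition support_set :: "('s,'a) tsi \<Rightarrow> ('s,'a) trans set \<Rightarrow> bool" where
  "support_set M N \<longleftrightarrow> (\<exists>s\<in>states M. N = Xs M s) \<or> (N \<noteq> {} \<and> conflict_free M N)"

definition sqsub :: "('s,'a) tsi \<Rightarrow> ('s,'a) trans set \<Rightarrow> ('s,'a) trans set \<Rightarrow> bool" where
  "sqsub M N R \<longleftrightarrow> N \<subseteq> R \<and> \<not> (\<exists>t\<in>R - N. \<forall>t'\<in>N. otimes M t t')"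

definition calX :: "('s,'a) tsi \<Rightarrow> ('s,'a) trans set set" where
  "calX M = {Xs M s | s. s \<in> states M} \<union>
            {N. support_set M N \<and> (\<exists>s\<in>states M. sqsub M N (Xs M s))}"

definition acts :: "('s,'a) tsi \<Rightarrow> ('s,'a) act set" where
  "acts M = Tr ` trans M \<union> {Eps}"

definition procs :: "('s,'a) tsi \<Rightarrow> ('s,'a) proc set" where
  "procs M = calX M \<times> acts M"

definition H0 :: "('s,'a) tsi \<Rightarrow> ('s,'a) proc" where
  "H0 M = (Xs M (init M), Eps)"

section \<open>TFL formulas (with the derived duals as constructors, for positive normal form)\<close>

datatype ('a,'v) tfl =
    FVar 'v
  | FNeg "('a,'v) tfl"
  | FConj "('a,'v) tfl" "('a,'v) tfl"
  | FDisj "('a,'v) tfl" "('a,'v) tfl"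
  | DiaC 'a "('a,'v) tfl"
  | BoxC 'a "('a,'v) tfl"
  | DiaNC 'a "('a,'v) tfl"
  | BoxNC 'a "('a,'v) tfl"
  | DiaOt "('a,'v) tfl"
  | BoxOt "('a,'v) tfl"
  | Mu 'v "('a,'v) tfl"
  | Nu 'v "('a,'v) tfl"

fun sub :: "('a,'v) tfl \<Rightarrow> ('a,'v) tfl set" where
  "sub (FVar Z) = {FVar Z}"
| "sub (FNeg p) = insert (FNeg p) (sub p)"
| "sub (FConj p q) = insert (FConj p q) (sub p \<union> sub q)"
| "sub (FDisj p q) = insert (FDisj p q) (sub p \<union> sub q)"
| "sub (DiaC a p) = insert (DiaC a p) (sub p)"
| "sub (BoxC a p) = insert (BoxC a p) (sub p)"
| "sub (DiaNC a p) = insert (DiaNC a p) (sub p)"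
| "sub (BoxNC a p) = insert (BoxNC a p) (sub p)"
| "sub (DiaOt p) = insert (DiaOt p) (sub p)"
| "sub (BoxOt p) = insert (BoxOt p) (sub p)"
| "sub (Mu Z p) = insert (Mu Z p) (sub p)"
| "sub (Nu Z p) = insert (Nu Z p) (sub p)"

fun bvars :: "('a,'v) tfl \<Rightarrow> 'v list" where
  "bvars (FVar Z) = []"
| "bvars (FNeg p) = bvars p"
| "bvars (FConj p q) = bvars p @ bvars q"
| "bvars (FDisj p q) = bvars p @ bvars q"
| "bvars (DiaC a p) = bvars p"
| "bvars (BoxC a p) = bvars p"
| "bvars (DiaNC a p) = bvars p"
| "bvars (BoxNC a p) = bvars p"
| "bvars (DiaOt p) = bvars p"
| "bvars (BoxOt p) = bvars p"
| "bvars (Mu Z p) = Z # bvars p"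
| "bvars (Nu Z p) = Z # bvars p"

fun fvars :: "('a,'v) tfl \<Rightarrow> 'v set" where
  "fvars (FVar Z) = {Z}"
| "fvars (FNeg p) = fvars p"
| "fvars (FConj p q) = fvars p \<union> fvars q"
| "fvars (FDisj p q) = fvars p \<union> fvars q"
| "fvars (DiaC a p) = fvars p"
| "fvars (BoxC a p) = fvars p"
| "fvars (DiaNC a p) = fvars p"
| "fvars (BoxNC a p) = fvars p"
| "fvars (DiaOt p) = fvars p"
| "fvars (BoxOt p) = fvars p"
| "fvars (Mu Z p) = fvars p - {Z}"
| "fvars (Nu Z p) = fvars p - {Z}"

fun neg_on_vars :: "('a,'v) tfl \<Rightarrow> bool" where
  "neg_on_vars (FVar Z) = True"
| "neg_on_vars (FNeg p) = (\<exists>Z. p = FVar Z)"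
| "neg_on_vars (FConj p q) = (neg_on_vars p \<and> neg_on_vars q)"
| "neg_on_vars (FDisj p q) = (neg_on_vars p \<and> neg_on_vars q)"
| "neg_on_vars (DiaC a p) = neg_on_vars p"
| "neg_on_vars (BoxC a p) = neg_on_vars p"
| "neg_on_vars (DiaNC a p) = neg_on_vars p"
| "neg_on_vars (BoxNC a p) = neg_on_vars p"
| "neg_on_vars (DiaOt p) = neg_on_vars p"
| "neg_on_vars (BoxOt p) = neg_on_vars p"
| "neg_on_vars (Mu Z p) = neg_on_vars p"
| "neg_on_vars (Nu Z p) = neg_on_vars p"

text \<open>Positive normal form: negation only on variables, no two binders bind the same
  variable; moreover (well-formedness / well-naming) bound variables never occur negated
  (positivity of fixpoint bodies) and no variable occurs both free and bound.\<close>
definition pnf :: "('a,'v) tfl \<Rightarrow> bool" where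
  "pnf \<phi> \<longleftrightarrow> neg_on_vars \<phi> \<and> distinct (bvars \<phi>) \<and>
     (\<forall>Z\<in>set (bvars \<phi>). FNeg (FVar Z) \<notin> sub \<phi>) \<and>
     set (bvars \<phi>) \<inter> fvars \<phi> = {}"

definition dia_c :: "('s,'a) tsi \<Rightarrow> 'a \<Rightarrow> ('s,'a) proc set \<Rightarrow> ('s,'a) proc set" where
  "dia_c M a X = {(R,t) \<in> procs M. \<exists>r\<in>R. lab r = a \<and> le_c M t r \<and> (Xs M (tgt r), Tr r) \<in> X}"

definition dia_nc :: "('s,'a) tsi \<Rightarrow> 'a \<Rightarrow> ('s,'a) proc set \<Rightarrow> ('s,'a) proc set" where
  "dia_nc M a X = {(R,t) \<in> procs M. \<exists>r\<in>R. lab r = a \<and> ominus M t r \<and> (Xs M (tgt r), Tr r) \<in> X}"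

definition dia_ot :: "('s,'a) tsi \<Rightarrow> ('s,'a) proc set \<Rightarrow> ('s,'a) proc set" where
  "dia_ot M X = {(R,t) \<in> procs M. \<exists>N\<in>calX M. sqsub M N R \<and> (N,t) \<in> X}"

text \<open>Duals are interpreted literally as their defining negations; for \<nu> we unfold
  \<not>\<mu>Z.\<not>\<phi>[\<not>Z/Z] semantically.\<close>
fun sem :: "('s,'a) tsi \<Rightarrow> ('v \<Rightarrow> ('s,'a) proc set) \<Rightarrow> ('a,'v) tfl \<Rightarrow> ('s,'a) proc set" where
  "sem M V (FVar Z) = V Z"
| "sem M V (FNeg p) = procs M - sem M V p"
| "sem M V (FConj p q) = sem M V p \<inter> sem M V q"
| "sem M V (FDisj p q) = procs M - ((procs M - sem M V p) \<inter> (procs M - sem M V q))"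
| "sem M V (DiaC a p) = dia_c M a (sem M V p)"
| "sem M V (BoxC a p) = procs M - dia_c M a (procs M - sem M V p)"
| "sem M V (DiaNC a p) = dia_nc M a (sem M V p)"
| "sem M V (BoxNC a p) = procs M - dia_nc M a (procs M - sem M V p)"
| "sem M V (DiaOt p) = dia_ot M (sem M V p)"
| "sem M V (BoxOt p) = procs M - dia_ot M (procs M - sem M V p)"
| "sem M V (Mu Z p) = \<Inter>{Q. Q \<subseteq> procs M \<and> sem M (V(Z := Q)) p \<subseteq> Q}"
| "sem M V (Nu Z p) =
     procs M - \<Inter>{Q. Q \<subseteq> procs M \<and> procs M - sem M (V(Z := procs M - Q)) p \<subseteq> Q}"

type_synonym ('s,'a,'v) config = "('s,'a) proc \<times> ('a,'v) tfl"

definition body :: "('a,'v) tfl \<Rightarrow> 'v \<Rightarrow> ('a,'v) tfl" where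
  "body \<phi> Z = (THE \<psi>. Mu Z \<psi> \<in> sub \<phi> \<or> Nu Z \<psi> \<in> sub \<phi>)"

definition moves :: "('s,'a) tsi \<Rightarrow> ('a,'v) tfl \<Rightarrow> ('s,'a,'v) config \<Rightarrow> ('s,'a,'v) config set" where
  "moves M \<phi> c = (case c of ((R,t),\<psi>) \<Rightarrow> (case \<psi> of
       FVar Z \<Rightarrow> (if Z \<in> set (bvars \<phi>) then {((R,t), body \<phi> Z)} else {})
     | FNeg _ \<Rightarrow> {}
     | FConj p q \<Rightarrow> {((R,t),p), ((R,t),q)}
     | FDisj p q \<Rightarrow> {((R,t),p), ((R,t),q)}
     | DiaC a p \<Rightarrow> {((Xs M (tgt r), Tr r), p) | r. r \<in> R \<and> lab r = a \<and> le_c M t r}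
     | BoxC a p \<Rightarrow> {((Xs M (tgt r), Tr r), p) | r. r \<in> R \<and> lab r = a \<and> le_c M t r}
     | DiaNC a p \<Rightarrow> {((Xs M (tgt r), Tr r), p) | r. r \<in> R \<and> lab r = a \<and> ominus M t r}
     | BoxNC a p \<Rightarrow> {((Xs M (tgt r), Tr r), p) | r. r \<in> R \<and> lab r = a \<and> ominus M t r}
     | DiaOt p \<Rightarrow> {((N,t), p) | N. N \<in> calX M \<and> sqsub M N R}
     | BoxOt p \<Rightarrow> {((N,t), p) | N. N \<in> calX M \<and> sqsub M N R}
     | Mu Z p \<Rightarrow> {((R,t), FVar Z)}
     | Nu Z p \<Rightarrow> {((R,t), FVar Z)}))"

text \<open>Positions where Eve chooses; at all other positions with a choice Adam chooses
  (positions with a single successor are deterministic).\<close>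
definition eve_pos :: "('s,'a,'v) config \<Rightarrow> bool" where
  "eve_pos c = (case snd c of FDisj _ _ \<Rightarrow> True | DiaC _ _ \<Rightarrow> True | DiaNC _ _ \<Rightarrow> True
                 | DiaOt _ \<Rightarrow> True | _ \<Rightarrow> False)"

definition eve_wins_final :: "('v \<Rightarrow> ('s,'a) proc set) \<Rightarrow> ('s,'a,'v) config \<Rightarrow> bool" where
  "eve_wins_final V c = (case c of (H,\<psi>) \<Rightarrow> (case \<psi> of
       FVar Z \<Rightarrow> H \<in> V Z
     | FNeg p \<Rightarrow> (case p of FVar Z \<Rightarrow> H \<notin> V Z | _ \<Rightarrow> False)
     | BoxC _ _ \<Rightarrow> True
     | BoxNC _ _ \<Rightarrow> True
     | BoxOt _ \<Rightarrow> True
     | _ \<Rightarrow> False))"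

definition inf_often_var :: "(nat \<Rightarrow> ('s,'a,'v) config) \<Rightarrow> 'v \<Rightarrow> bool" where
  "inf_often_var p Z \<longleftrightarrow> infinite {i. snd (p i) = FVar Z}"

text \<open>Eve wins an infinite play iff the syntactically outermost variable occurring
  infinitely often is bound by a \<nu>.\<close>
definition eve_wins_inf :: "('a,'v) tfl \<Rightarrow> (nat \<Rightarrow> ('s,'a,'v) config) \<Rightarrow> bool" where
  "eve_wins_inf \<phi> p \<longleftrightarrow> (\<exists>Z \<chi>. Nu Z \<chi> \<in> sub \<phi> \<and> inf_often_var p Z \<and>
      (\<forall>Z'. inf_often_var p Z' \<longrightarrow>
         (\<exists>\<chi>'. Mu Z' \<chi>' \<in> sub (Nu Z \<chi>) \<or> Nu Z' \<chi>' \<in> sub (Nu Z \<chi>))))"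

text \<open>Strategies for Eve map finite histories (nonempty lists of configurations, the last
  one being the current configuration) to the next configuration.\<close>
type_synonym ('s,'a,'v) strategy = "('s,'a,'v) config list \<Rightarrow> ('s,'a,'v) config"

definition partial_play :: "('s,'a) tsi \<Rightarrow> ('a,'v) tfl \<Rightarrow> ('s,'a,'v) config \<Rightarrow>
    ('s,'a,'v) strategy \<Rightarrow> ('s,'a,'v) config list \<Rightarrow> bool" where
  "partial_play M \<phi> c0 f ps \<longleftrightarrow> ps \<noteq> [] \<and> hd ps = c0 \<and>
     (\<forall>i. Suc i < length ps \<longrightarrow> ps ! Suc i \<in> moves M \<phi> (ps ! i) \<and>
         (eve_pos (ps ! i) \<longrightarrow> ps ! Suc i = f (take (Suc i) ps)))"

definition inf_play :: "('s,'a) tsi \<Rightarrow> ('a,'v) tfl \<Rightarrow> ('s,'a,'v) config \<Rightarrow>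
    ('s,'a,'v) strategy \<Rightarrow> (nat \<Rightarrow> ('s,'a,'v) config) \<Rightarrow> bool" where
  "inf_play M \<phi> c0 f p \<longleftrightarrow> p 0 = c0 \<and>
     (\<forall>i. p (Suc i) \<in> moves M \<phi> (p i) \<and>
         (eve_pos (p i) \<longrightarrow> p (Suc i) = f (map p [0..<Suc i])))"

definition eve_winning_strategy :: "('s,'a) tsi \<Rightarrow> ('v \<Rightarrow> ('s,'a) proc set) \<Rightarrow>
    ('s,'a) proc \<Rightarrow> ('a,'v) tfl \<Rightarrow> ('s,'a,'v) strategy \<Rightarrow> bool" where
  "eve_winning_strategy M V H \<phi> f \<longleftrightarrow>
     (\<forall>ps. partial_play M \<phi> (H,\<phi>) f ps \<longrightarrow> eve_pos (last ps) \<longrightarrow>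
         moves M \<phi> (last ps) \<noteq> {} \<longrightarrow> f ps \<in> moves M \<phi> (last ps)) \<and>
     (\<forall>ps. partial_play M \<phi> (H,\<phi>) f ps \<longrightarrow> moves M \<phi> (last ps) = {} \<longrightarrow>
         eve_wins_final V (last ps)) \<and>
     (\<forall>p. inf_play M \<phi> (H,\<phi>) f p \<longrightarrow> eve_wins_inf \<phi> p)"

definition eve_wins_game :: "('s,'a) tsi \<Rightarrow> ('v \<Rightarrow> ('s,'a) proc set) \<Rightarrow>
    ('s,'a) proc \<Rightarrow> ('a,'v) tfl \<Rightarrow> bool" where
  "eve_wins_game M V H \<phi> \<longleftrightarrow> (\<exists>f. eve_winning_strategy M V H \<phi> f)"

end

theory Submission
  imports Defs "HOL-Library.Infinite_Set"
begin


definition ppl :: "(('s,'a,'v) config \<Rightarrow> ('s,'a,'v) config set) \<Rightarrow> ('s,'a,'v) config \<Rightarrow>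
    ('s,'a,'v) strategy \<Rightarrow> ('s,'a,'v) config list \<Rightarrow> bool" where
  "ppl mv c0 f ps \<longleftrightarrow> ps \<noteq> [] \<and> hd ps = c0 \<and>
     (\<forall>i. Suc i < length ps \<longrightarrow> ps ! Suc i \<in> mv (ps ! i) \<and>
         (eve_pos (ps ! i) \<longrightarrow> ps ! Suc i = f (take (Suc i) ps)))"

lemma ppl_single[simp]: "ppl mv c0 f [c] \<longleftrightarrow> c = c0"
  by (simp add: ppl_def)

lemma ppl_ne: "ppl mv c0 f ps \<Longrightarrow> ps \<noteq> []"
  by (simp add: ppl_def)

lemma ppl_snoc:
  assumes ne: "ps \<noteq> []"
  shows "ppl mv c0 f (ps @ [c]) \<longleftrightarrow>
    ppl mv c0 f ps \<and> c \<in> mv (last ps) \<and> (eve_pos (last ps) \<longrightarrow> c = f ps)"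
proof -
  define n where "n = length ps"
  have n0: "n > 0" using ne n_def by simp
  have lst: "last ps = ps ! (n - 1)" using ne n_def by (simp add: last_conv_nth)
  have A: "(\<forall>i. Suc i < length (ps @ [c]) \<longrightarrow> (ps@[c]) ! Suc i \<in> mv ((ps@[c]) ! i) \<and>
         (eve_pos ((ps@[c]) ! i) \<longrightarrow> (ps@[c]) ! Suc i = f (take (Suc i) (ps@[c]))))
     \<longleftrightarrow> (\<forall>i. Suc i < length ps \<longrightarrow> ps ! Suc i \<in> mv (ps ! i) \<and>
         (eve_pos (ps ! i) \<longrightarrow> ps ! Suc i = f (take (Suc i) ps))) \<and>
         c \<in> mv (last ps) \<and> (eve_pos (last ps) \<longrightarrow> c = f ps)"
  proof
    assume H: "\<forall>i. Suc i < length (ps @ [c]) \<longrightarrow> (ps@[c]) ! Suc i \<in> mv ((ps@[c]) ! i) \<and>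
         (eve_pos ((ps@[c]) ! i) \<longrightarrow> (ps@[c]) ! Suc i = f (take (Suc i) (ps@[c])))"
    have 1: "\<forall>i. Suc i < length ps \<longrightarrow> ps ! Suc i \<in> mv (ps ! i) \<and>
         (eve_pos (ps ! i) \<longrightarrow> ps ! Suc i = f (take (Suc i) ps))"
    proof (intro allI impI)
      fix i assume i: "Suc i < length ps"
      from H[rule_format, of i] i show "ps ! Suc i \<in> mv (ps ! i) \<and>
         (eve_pos (ps ! i) \<longrightarrow> ps ! Suc i = f (take (Suc i) ps))"
        by (simp add: nth_append)
    qed
    from H[rule_format, of "n - 1"] n0 have "c \<in> mv (last ps) \<and> (eve_pos (last ps) \<longrightarrow> c = f ps)"
      by (simp add: nth_append lst n_def)
    with 1 show "(\<forall>i. Suc i < length ps \<longrightarrow> ps ! Suc i \<in> mv (ps ! i) \<and>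
         (eve_pos (ps ! i) \<longrightarrow> ps ! Suc i = f (take (Suc i) ps))) \<and>
         c \<in> mv (last ps) \<and> (eve_pos (last ps) \<longrightarrow> c = f ps)" by blast
  next
    assume H: "(\<forall>i. Suc i < length ps \<longrightarrow> ps ! Suc i \<in> mv (ps ! i) \<and>
         (eve_pos (ps ! i) \<longrightarrow> ps ! Suc i = f (take (Suc i) ps))) \<and>
         c \<in> mv (last ps) \<and> (eve_pos (last ps) \<longrightarrow> c = f ps)"
    show "\<forall>i. Suc i < length (ps @ [c]) \<longrightarrow> (ps@[c]) ! Suc i \<in> mv ((ps@[c]) ! i) \<and>
         (eve_pos ((ps@[c]) ! i) \<longrightarrow> (ps@[c]) ! Suc i = f (take (Suc i) (ps@[c])))"
    proof (intro allI impI)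
      fix i assume i: "Suc i < length (ps @ [c])"
      show "(ps@[c]) ! Suc i \<in> mv ((ps@[c]) ! i) \<and>
         (eve_pos ((ps@[c]) ! i) \<longrightarrow> (ps@[c]) ! Suc i = f (take (Suc i) (ps@[c])))"
      proof (cases "Suc i < length ps")
        case True with H show ?thesis by (simp add: nth_append)
      next
        case False
        then have "i = n - 1" using i n_def by simp
        with H n0 show ?thesis by (simp add: nth_append lst n_def)
      qed
    qed
  qed
  show ?thesis unfolding ppl_def using A ne by simp
qed

lemma ppl_induct[consumes 1, case_names single snoc]:
  assumes "ppl mv c0 f ps" "P [c0]"
    "\<And>ps c. ppl mv c0 f ps \<Longrightarrow> P ps \<Longrightarrow> c \<in> mv (last ps) \<Longrightarrow>
        (eve_pos (last ps) \<Longrightarrow> c = f ps) \<Longrightarrow> P (ps @ [c])"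
  shows "P ps"
  using assms(1)
proof (induction ps rule: rev_induct)
  case Nil then show ?case by (simp add: ppl_def)
next
  case (snoc x xs)
  show ?case
  proof (cases "xs = []")
    case True with snoc.prems assms(2) show ?thesis by simp
  next
    case False
    with snoc.prems ppl_snoc[OF False] have "ppl mv c0 f xs" "x \<in> mv (last xs)"
      "eve_pos (last xs) \<Longrightarrow> x = f xs" by auto
    with snoc.IH assms(3) show ?thesis by blast
  qed
qed

definition pref :: "(nat \<Rightarrow> 'c) \<Rightarrow> nat \<Rightarrow> 'c list" where
  "pref p n = map p [0..<Suc n]"

lemma pref_0[simp]: "pref p 0 = [p 0]" by (simp add: pref_def)
lemma pref_Suc: "pref p (Suc n) = pref p n @ [p (Suc n)]" by (simp add: pref_def)
lemma pref_ne[simp]: "pref p n \<noteq> []" by (simp add: pref_def)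
lemma last_pref[simp]: "last (pref p n) = p n" by (simp add: pref_def)
lemma hd_pref[simp]: "hd (pref p n) = p 0" by (simp add: pref_def hd_map del: upt_Suc)
lemma set_pref: "set (pref p n) = p ` {..n}" by (auto simp: pref_def atLeast0AtMost[symmetric] simp del: upt_Suc)

lemma pref_split: "pref p (n + k) = map p [0..<k] @ pref (\<lambda>i. p (i + k)) n"
  by (rule nth_equalityI) (auto simp: pref_def nth_append add.commute)

lemma inf_ppl_iff:
  "(\<forall>n. ppl mv c0 f (pref p n)) \<longleftrightarrow> p 0 = c0 \<and>
     (\<forall>i. p (Suc i) \<in> mv (p i) \<and> (eve_pos (p i) \<longrightarrow> p (Suc i) = f (pref p i)))"
proof
  assume H: "\<forall>n. ppl mv c0 f (pref p n)"
  have "p 0 = c0" using H[rule_format, of 0] by simp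
  moreover have "p (Suc i) \<in> mv (p i) \<and> (eve_pos (p i) \<longrightarrow> p (Suc i) = f (pref p i))" for i
    using H[rule_format, of "Suc i"] by (simp add: pref_Suc ppl_snoc)
  ultimately show "p 0 = c0 \<and>
     (\<forall>i. p (Suc i) \<in> mv (p i) \<and> (eve_pos (p i) \<longrightarrow> p (Suc i) = f (pref p i)))" by blast
next
  assume H: "p 0 = c0 \<and>
     (\<forall>i. p (Suc i) \<in> mv (p i) \<and> (eve_pos (p i) \<longrightarrow> p (Suc i) = f (pref p i)))"
  show "\<forall>n. ppl mv c0 f (pref p n)"
  proof
    fix n show "ppl mv c0 f (pref p n)"
      by (induction n) (use H in \<open>auto simp: pref_Suc ppl_snoc\<close>)
  qed
qed

lemma inf_ppl_step: "\<forall>n. ppl mv c0 f (pref p n) \<Longrightarrow> p (Suc i) \<in> mv (p i)"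
  using inf_ppl_iff by blast

definition win :: "(('s,'a,'v) config \<Rightarrow> ('s,'a,'v) config set) \<Rightarrow> (('s,'a,'v) config \<Rightarrow> bool)
   \<Rightarrow> ((nat \<Rightarrow> ('s,'a,'v) config) \<Rightarrow> bool) \<Rightarrow> ('s,'a,'v) config \<Rightarrow> ('s,'a,'v) strategy \<Rightarrow> bool" where
  "win mv fw iw c0 f \<longleftrightarrow>
     (\<forall>ps. ppl mv c0 f ps \<longrightarrow> eve_pos (last ps) \<longrightarrow> mv (last ps) \<noteq> {} \<longrightarrow> f ps \<in> mv (last ps)) \<and>
     (\<forall>ps. ppl mv c0 f ps \<longrightarrow> mv (last ps) = {} \<longrightarrow> fw (last ps)) \<and>
     (\<forall>p. (\<forall>n. ppl mv c0 f (pref p n)) \<longrightarrow> iw p)"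

lemma win_iff: "eve_winning_strategy M V H \<phi> f \<longleftrightarrow>
   win (moves M \<phi>) (eve_wins_final V) (eve_wins_inf \<phi>) (H,\<phi>) f"
proof -
  have pp: "partial_play M \<phi> c f = ppl (moves M \<phi>) c f" for c
    by (simp add: fun_eq_iff partial_play_def ppl_def)
  have ip: "inf_play M \<phi> c f p \<longleftrightarrow> (\<forall>n. ppl (moves M \<phi>) c f (pref p n))" for c p
    using inf_ppl_iff[of "moves M \<phi>" c f p] unfolding inf_play_def pref_def by (simp del: upt_Suc)
  show ?thesis unfolding eve_winning_strategy_def win_def pp ip by simp
qed

lemma win_prepend:
  assumes A1: "eve_pos c0 \<Longrightarrow> ch \<in> mv c0"
    and A2: "\<And>c1. c1 \<in> mv c0 \<Longrightarrow> (eve_pos c0 \<Longrightarrow> c1 = ch) \<Longrightarrow> win mv fw iw c1 (F c1)"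
    and A3: "mv c0 = {} \<Longrightarrow> fw c0"
    and A4: "\<And>p. iw (\<lambda>n. p (n + 1)) \<Longrightarrow> iw p"
  shows "win mv fw iw c0 (\<lambda>ps. if length ps \<le> 1 then ch else F (ps ! 1) (tl ps))"
    (is "win mv fw iw c0 ?f")
proof -
  have inv: "ps = [c0] \<or> (\<exists>ps'. ps = c0 # ps' \<and> hd ps' \<in> mv c0 \<and> (eve_pos c0 \<longrightarrow> hd ps' = ch)
      \<and> ppl mv (hd ps') (F (hd ps')) ps')" if "ppl mv c0 ?f ps" for ps
    using that
  proof (induction rule: ppl_induct)
    case single then show ?case by simp
  next
    case (snoc ps c)
    from snoc.IH show ?case
    proof
      assume "ps = [c0]"
      with snoc.hyps snoc.prems show ?thesis by auto
    next
      assume "\<exists>ps'. ps = c0 # ps' \<and> hd ps' \<in> mv c0 \<and> (eve_pos c0 \<longrightarrow> hd ps' = ch)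
        \<and> ppl mv (hd ps') (F (hd ps')) ps'"
      then obtain ps' where P: "ps = c0 # ps'" "hd ps' \<in> mv c0" "eve_pos c0 \<longrightarrow> hd ps' = ch"
        "ppl mv (hd ps') (F (hd ps')) ps'" by blast
      have ne: "ps' \<noteq> []" using P(4) ppl_ne by blast
      have fps: "?f ps = F (hd ps') ps'" using P(1) ne by (cases ps') auto
      have "ppl mv (hd ps') (F (hd ps')) (ps' @ [c])"
        using ppl_snoc[OF ne] P(4) snoc.hyps snoc.prems fps P(1) ne by auto
      then show ?thesis using P ne by auto
    qed
  qed
  show ?thesis unfolding win_def
  proof (intro conjI allI impI)
    fix ps assume pp: "ppl mv c0 ?f ps" and e: "eve_pos (last ps)" and m: "mv (last ps) \<noteq> {}"
    from inv[OF pp] show "?f ps \<in> mv (last ps)"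
    proof
      assume "ps = [c0]" then show ?thesis using A1 e by simp
    next
      assume "\<exists>ps'. ps = c0 # ps' \<and> hd ps' \<in> mv c0 \<and> (eve_pos c0 \<longrightarrow> hd ps' = ch)
        \<and> ppl mv (hd ps') (F (hd ps')) ps'"
      then obtain ps' where P: "ps = c0 # ps'" "hd ps' \<in> mv c0" "eve_pos c0 \<longrightarrow> hd ps' = ch"
        "ppl mv (hd ps') (F (hd ps')) ps'" by blast
      have ne: "ps' \<noteq> []" using P(4) ppl_ne by blast
      have fps: "?f ps = F (hd ps') ps'" using P(1) ne by (cases ps') auto
      have w: "win mv fw iw (hd ps') (F (hd ps'))" using A2 P by blast
      have "last ps = last ps'" using P(1) ne by simp
      with w P(4) e m fps show ?thesis unfolding win_def by metis
    qed
  next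
    fix ps assume pp: "ppl mv c0 ?f ps" and m: "mv (last ps) = {}"
    from inv[OF pp] show "fw (last ps)"
    proof
      assume "ps = [c0]" then show ?thesis using A3 m by simp
    next
      assume "\<exists>ps'. ps = c0 # ps' \<and> hd ps' \<in> mv c0 \<and> (eve_pos c0 \<longrightarrow> hd ps' = ch)
        \<and> ppl mv (hd ps') (F (hd ps')) ps'"
      then obtain ps' where P: "ps = c0 # ps'" "hd ps' \<in> mv c0" "eve_pos c0 \<longrightarrow> hd ps' = ch"
        "ppl mv (hd ps') (F (hd ps')) ps'" by blast
      have ne: "ps' \<noteq> []" using P(4) ppl_ne by blast
      have w: "win mv fw iw (hd ps') (F (hd ps'))" using A2 P by blast
      have "last ps = last ps'" using P(1) ne by simp
      with w P(4) m show ?thesis unfolding win_def by metis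
    qed
  next
    fix p assume H: "\<forall>n. ppl mv c0 ?f (pref p n)"
    define q where "q = (\<lambda>i. p (i + 1))"
    have ps: "pref p (n + 1) = p 0 # pref q n" for n
      using pref_split[of p n 1] by (simp add: q_def)
    have EX: "\<exists>ps'. pref p (n+1) = c0 # ps' \<and> hd ps' \<in> mv c0 \<and> (eve_pos c0 \<longrightarrow> hd ps' = ch)
        \<and> ppl mv (hd ps') (F (hd ps')) ps'" for n
      using inv[OF H[rule_format, of "n+1"]] ps[of n] by auto
    then have Q: "q 0 \<in> mv c0 \<and> (eve_pos c0 \<longrightarrow> q 0 = ch) \<and> ppl mv (q 0) (F (q 0)) (pref q n)" for n
    proof -
      obtain ps' where P: "pref p (n+1) = c0 # ps'" "hd ps' \<in> mv c0" "eve_pos c0 \<longrightarrow> hd ps' = ch"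
        "ppl mv (hd ps') (F (hd ps')) ps'" using EX[of n] by blast
      have "ps' = pref q n" using P(1) ps[of n] by simp
      then show ?thesis using P by (simp add: q_def)
    qed
    have "win mv fw iw (q 0) (F (q 0))" using A2 Q[of 0] by blast
    then have "iw q" using Q unfolding win_def by blast
    then show "iw p" using A4 q_def by simp
  qed
qed

fun fsplit :: "'c set \<Rightarrow> 'c list \<Rightarrow> 'c list option" where
  "fsplit T [] = None"
| "fsplit T (c # cs) = (if c \<in> T then Some (c # cs) else fsplit T cs)"

lemma fsplit_None: "fsplit T xs = None \<longleftrightarrow> set xs \<inter> T = {}"
  by (induction xs) auto

lemma fsplit_Some: "fsplit T xs = Some s \<Longrightarrow> \<exists>pre. xs = pre @ s \<and> s \<noteq> [] \<and> hd s \<in> T"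
  by (induction xs) (auto split: if_splits intro: exI[of _ "_ # _"])

lemma fsplit_snoc: "fsplit T (xs @ [c]) =
   (case fsplit T xs of Some s \<Rightarrow> Some (s @ [c]) | None \<Rightarrow> if c \<in> T then Some [c] else None)"
  by (induction xs) auto

lemma fsplit_app: "set xs \<inter> T = {} \<Longrightarrow> ys \<noteq> [] \<Longrightarrow> hd ys \<in> T \<Longrightarrow> fsplit T (xs @ ys) = Some ys"
  by (induction xs) (auto simp: neq_Nil_conv)

lemma win_switch:
  assumes c0: "c0 \<in> S"
    and closed: "\<And>c. c \<in> S \<Longrightarrow> mvA c \<subseteq> S"
    and agree: "\<And>c. c \<in> S \<Longrightarrow> c \<notin> T \<Longrightarrow> mv c = mvA c"
    and trm: "\<And>c. c \<in> S \<Longrightarrow> c \<in> T \<Longrightarrow> mvA c = {}"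
    and sig: "win mvA fwA iwA c0 \<sigma>"
    and fwa: "\<And>c. c \<in> S \<Longrightarrow> c \<notin> T \<Longrightarrow> fwA c \<Longrightarrow> fw c"
    and iwa: "\<And>p. iwA p \<Longrightarrow> iw p"
    and iws: "\<And>p k. iw (\<lambda>n. p (n + k)) \<Longrightarrow> iw p"
    and hit: "\<And>c. c \<in> S \<Longrightarrow> c \<in> T \<Longrightarrow> fwA c \<Longrightarrow> win mv fw iw c (\<tau> c)"
  shows "win mv fw iw c0 (\<lambda>ps. case fsplit T ps of None \<Rightarrow> \<sigma> ps | Some s \<Rightarrow> \<tau> (hd s) s)"
    (is "win mv fw iw c0 ?f")
proof -
  have sig1: "\<And>ps. ppl mvA c0 \<sigma> ps \<Longrightarrow> eve_pos (last ps) \<Longrightarrow> mvA (last ps) \<noteq> {} \<Longrightarrow> \<sigma> ps \<in> mvA (last ps)"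
    and sig2: "\<And>ps. ppl mvA c0 \<sigma> ps \<Longrightarrow> mvA (last ps) = {} \<Longrightarrow> fwA (last ps)"
    and sig3: "\<And>p. (\<forall>n. ppl mvA c0 \<sigma> (pref p n)) \<Longrightarrow> iwA p"
    using sig unfolding win_def by blast+
  have inv: "(fsplit T ps = None \<and> ppl mvA c0 \<sigma> ps \<and> set ps \<subseteq> S) \<or>
     (\<exists>s. fsplit T ps = Some s \<and> hd s \<in> S \<and> hd s \<in> T \<and> fwA (hd s) \<and>
        ppl mv (hd s) (\<tau> (hd s)) s \<and> last ps = last s)" if "ppl mv c0 ?f ps" for ps
    using that
  proof (induction rule: ppl_induct)
    case single
    show ?case
    proof (cases "c0 \<in> T")
      case True
      then have "fwA c0" using sig2[of "[c0]"] trm[OF c0] by simp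
      then show ?thesis using True c0 by simp
    next
      case False then show ?thesis using c0 by simp
    qed
  next
    case (snoc ps c)
    have ne: "ps \<noteq> []" using snoc.hyps ppl_ne by blast
    from snoc.IH show ?case
    proof
      assume N: "fsplit T ps = None \<and> ppl mvA c0 \<sigma> ps \<and> set ps \<subseteq> S"
      have lS: "last ps \<in> S" "last ps \<notin> T" using N ne fsplit_None[of T ps] last_in_set[OF ne] by blast+
      have fps: "?f ps = \<sigma> ps" using N by simp
      have cm: "c \<in> mvA (last ps)" using snoc.hyps(2) agree[OF lS] by simp
      have pp: "ppl mvA c0 \<sigma> (ps @ [c])" using ppl_snoc[OF ne] N cm snoc.hyps(3) fps by auto
      have cS: "c \<in> S" using closed[OF lS(1)] cm by blast
      show ?thesis
      proof (cases "c \<in> T")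
        case True
        have "fwA c" using sig2[OF pp] trm[OF cS True] by simp
        then show ?thesis using True cS N by (simp add: fsplit_snoc)
      next
        case False
        then show ?thesis using N pp cS by (simp add: fsplit_snoc)
      qed
    next
      assume "\<exists>s. fsplit T ps = Some s \<and> hd s \<in> S \<and> hd s \<in> T \<and> fwA (hd s) \<and>
        ppl mv (hd s) (\<tau> (hd s)) s \<and> last ps = last s"
      then obtain s where P: "fsplit T ps = Some s" "hd s \<in> S" "hd s \<in> T" "fwA (hd s)"
        "ppl mv (hd s) (\<tau> (hd s)) s" "last ps = last s" by blast
      have sne: "s \<noteq> []" using P(5) ppl_ne by blast
      have fps: "?f ps = \<tau> (hd s) s" using P(1) by simp
      have "ppl mv (hd s) (\<tau> (hd s)) (s @ [c])" using ppl_snoc[OF sne] P snoc.hyps fps by auto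
      then show ?thesis using P sne by (simp add: fsplit_snoc)
    qed
  qed
  show ?thesis unfolding win_def
  proof (intro conjI allI impI)
    fix ps assume pp: "ppl mv c0 ?f ps" and e: "eve_pos (last ps)" and m: "mv (last ps) \<noteq> {}"
    have ne: "ps \<noteq> []" using pp ppl_ne by blast
    from inv[OF pp] show "?f ps \<in> mv (last ps)"
    proof
      assume N: "fsplit T ps = None \<and> ppl mvA c0 \<sigma> ps \<and> set ps \<subseteq> S"
      have lS: "last ps \<in> S" "last ps \<notin> T" using N ne fsplit_None[of T ps] last_in_set[OF ne] by blast+
      show ?thesis using sig1[of ps] N agree[OF lS] e m by simp
    next
      assume "\<exists>s. fsplit T ps = Some s \<and> hd s \<in> S \<and> hd s \<in> T \<and> fwA (hd s) \<and>
        ppl mv (hd s) (\<tau> (hd s)) s \<and> last ps = last s"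
      then obtain s where P: "fsplit T ps = Some s" "hd s \<in> S" "hd s \<in> T" "fwA (hd s)"
        "ppl mv (hd s) (\<tau> (hd s)) s" "last ps = last s" by blast
      have "win mv fw iw (hd s) (\<tau> (hd s))" using hit P by blast
      then show ?thesis using P e m unfolding win_def by auto
    qed
  next
    fix ps assume pp: "ppl mv c0 ?f ps" and m: "mv (last ps) = {}"
    have ne: "ps \<noteq> []" using pp ppl_ne by blast
    from inv[OF pp] show "fw (last ps)"
    proof
      assume N: "fsplit T ps = None \<and> ppl mvA c0 \<sigma> ps \<and> set ps \<subseteq> S"
      have lS: "last ps \<in> S" "last ps \<notin> T" using N ne fsplit_None[of T ps] last_in_set[OF ne] by blast+
      show ?thesis using sig2[of ps] N agree[OF lS] m fwa[OF lS] by simp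
    next
      assume "\<exists>s. fsplit T ps = Some s \<and> hd s \<in> S \<and> hd s \<in> T \<and> fwA (hd s) \<and>
        ppl mv (hd s) (\<tau> (hd s)) s \<and> last ps = last s"
      then obtain s where P: "fsplit T ps = Some s" "hd s \<in> S" "hd s \<in> T" "fwA (hd s)"
        "ppl mv (hd s) (\<tau> (hd s)) s" "last ps = last s" by blast
      have "win mv fw iw (hd s) (\<tau> (hd s))" using hit P by blast
      then show ?thesis using P m unfolding win_def by auto
    qed
  next
    fix p assume H: "\<forall>n. ppl mv c0 ?f (pref p n)"
    show "iw p"
    proof (cases "\<exists>i. p i \<in> T")
      case False
      then have "fsplit T (pref p n) = None" for n by (auto simp: fsplit_None set_pref)
      then have "ppl mvA c0 \<sigma> (pref p n)" for n using inv[OF H[rule_format, of n]] by auto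
      then show ?thesis using sig3 iwa by blast
    next
      case True
      define k where "k = (LEAST i. p i \<in> T)"
      have pk: "p k \<in> T" using True k_def by (metis LeastI)
      have before: "i < k \<Longrightarrow> p i \<notin> T" for i using k_def not_less_Least by blast
      define q where "q = (\<lambda>i. p (i + k))"
      have fs: "fsplit T (pref p (n + k)) = Some (pref q n)" for n
        unfolding pref_split q_def
        by (rule fsplit_app) (use before pk in \<open>auto simp: pref_def hd_map simp del: upt_Suc\<close>)
      have Q: "q 0 \<in> S \<and> q 0 \<in> T \<and> fwA (q 0) \<and> ppl mv (q 0) (\<tau> (q 0)) (pref q n)" for n
        using inv[OF H[rule_format, of "n + k"]] fs[of n] by auto
      have "win mv fw iw (q 0) (\<tau> (q 0))" using hit Q[of 0] by blast
      then have "iw q" using Q unfolding win_def by blast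
      then show ?thesis using iws q_def by blast
    qed
  qed
qed


fun lsplit :: "'c set \<Rightarrow> 'c list \<Rightarrow> 'c option \<times> 'c list" where
  "lsplit T [] = (None, [])"
| "lsplit T (c # cs) = (case lsplit T cs of (None, s) \<Rightarrow> (if c \<in> T then (Some c, s) else (None, c # s))
                      | (Some x, s) \<Rightarrow> (Some x, s))"

lemma lsplit_snoc: "lsplit T (xs @ [c]) =
   (if c \<in> T then (Some c, []) else (fst (lsplit T xs), snd (lsplit T xs) @ [c]))"
  by (induction xs) (auto split: option.splits prod.splits)

lemma lsplit_app: "c \<in> T \<Longrightarrow> set ys \<inter> T = {} \<Longrightarrow> lsplit T (xs @ c # ys) = (Some c, ys)"
proof (induction ys rule: rev_induct)
  case Nil then show ?case using lsplit_snoc[of T xs c] by simp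
next
  case (snoc y ys)
  then show ?case using lsplit_snoc[of T "xs @ c # ys" y] by simp
qed

lemma win_restart:
  assumes c0: "c0 \<in> S" "c0 \<in> T" "fwA c0"
    and closed: "\<And>c. c \<in> S \<Longrightarrow> mvA c \<subseteq> S"
    and agree: "\<And>c. c \<in> S \<Longrightarrow> c \<notin> T \<Longrightarrow> mv c = mvA c"
    and Tm: "\<And>c. c \<in> S \<Longrightarrow> c \<in> T \<Longrightarrow> mv c = {r c} \<and> r c \<in> S \<and> mvA c = {} \<and> \<not> eve_pos c"
    and sig: "\<And>c. c \<in> S \<Longrightarrow> c \<in> T \<Longrightarrow> fwA c \<Longrightarrow> win mvA fwA iwA (r c) (\<sigma> c)"
    and fwa: "\<And>c. c \<in> S \<Longrightarrow> c \<notin> T \<Longrightarrow> fwA c \<Longrightarrow> fw c"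
    and iwa: "\<And>p k. iwA (\<lambda>n. p (n + k)) \<Longrightarrow> iw p"
    and iwT: "\<And>p. infinite {i. p i \<in> T} \<Longrightarrow> (\<And>i. p (Suc i) \<in> mv (p i)) \<Longrightarrow> iw p"
  shows "win mv fw iw c0 (\<lambda>ps. \<sigma> (the (fst (lsplit T ps))) (snd (lsplit T ps)))"
    (is "win mv fw iw c0 ?f")
proof -
  have sigw: "win mvA fwA iwA (r c) (\<sigma> c)" if "c \<in> S" "c \<in> T" "fwA c" for c using sig that .
  have inv: "set ps \<subseteq> S \<and> (\<exists>c s. lsplit T ps = (Some c, s) \<and> c \<in> S \<and> c \<in> T \<and> fwA c \<and>
      set s \<inter> T = {} \<and> (s = [] \<longrightarrow> last ps = c) \<and>
      (s \<noteq> [] \<longrightarrow> last ps = last s \<and> ppl mvA (r c) (\<sigma> c) s))" if "ppl mv c0 ?f ps" for ps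
    using that
  proof (induction rule: ppl_induct)
    case single
    have "lsplit T [c0] = (Some c0, [])" using lsplit_snoc[of T "[]" c0] c0 by simp
    then show ?case using c0 by auto
  next
    case (snoc ps x)
    have ne: "ps \<noteq> []" using snoc.hyps(1) ppl_ne by blast
    from snoc.IH obtain c s where P: "set ps \<subseteq> S" "lsplit T ps = (Some c, s)" "c \<in> S" "c \<in> T" "fwA c"
      "set s \<inter> T = {}" "s = [] \<longrightarrow> last ps = c" "s \<noteq> [] \<longrightarrow> last ps = last s \<and> ppl mvA (r c) (\<sigma> c) s"
      by blast
    have fps: "?f ps = \<sigma> c s" using P(2) by simp
    have W: "win mvA fwA iwA (r c) (\<sigma> c)" using sigw P by blast
    have lS: "last ps \<in> S" using P(1) last_in_set[OF ne] by blast
    show ?case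
    proof (cases "s = []")
      case True
      then have lc: "last ps = c" using P by blast
      have xr: "x = r c" and xS: "x \<in> S" using Tm[OF P(3,4)] snoc.hyps(2) lc by auto
      show ?thesis
      proof (cases "x \<in> T")
        case True
        have c2: "\<forall>ps. ppl mvA (r c) (\<sigma> c) ps \<longrightarrow> mvA (last ps) = {} \<longrightarrow> fwA (last ps)"
          using W unfolding win_def by blast
        have "fwA x" using c2[rule_format, of "[r c]"] Tm[OF xS True] xr by simp
        then show ?thesis using True xS P(1) by (simp add: lsplit_snoc)
      next
        case False
        then show ?thesis using P xS xr True by (simp add: lsplit_snoc)
      qed
    next
      case False
      then have ls: "last ps = last s" and pp: "ppl mvA (r c) (\<sigma> c) s" using P by auto
      have lT: "last ps \<notin> T"
      proof
        assume "last ps \<in> T"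
        then have "last s \<in> set s \<inter> T" using ls last_in_set[OF False] by simp
        then show False using P(6) by blast
      qed
      have ag: "mv (last ps) = mvA (last ps)" by (rule agree[OF lS lT])
      have xm0: "x \<in> mvA (last ps)" using snoc.hyps(2) ag by blast
      then have xm: "x \<in> mvA (last s)" using ls by simp
      have pp2: "ppl mvA (r c) (\<sigma> c) (s @ [x])"
        using ppl_snoc[OF False] pp xm snoc.hyps(3) fps ls by auto
      have xS: "x \<in> S" using closed[OF lS] xm0 by blast
      show ?thesis
      proof (cases "x \<in> T")
        case True
        have c2: "\<forall>ps. ppl mvA (r c) (\<sigma> c) ps \<longrightarrow> mvA (last ps) = {} \<longrightarrow> fwA (last ps)"
          using W unfolding win_def by blast
        have "fwA x" using c2[rule_format, OF pp2] Tm[OF xS True] by simp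
        then show ?thesis using True xS P(1) by (simp add: lsplit_snoc)
      next
        case False
        then show ?thesis using P xS pp2 \<open>s \<noteq> []\<close> by (simp add: lsplit_snoc)
      qed
    qed
  qed
  show ?thesis unfolding win_def
  proof (intro conjI allI impI)
    fix ps assume pp: "ppl mv c0 ?f ps" and e: "eve_pos (last ps)" and m: "mv (last ps) \<noteq> {}"
    have ne: "ps \<noteq> []" using pp ppl_ne by blast
    from inv[OF pp] obtain c s where P: "set ps \<subseteq> S" "lsplit T ps = (Some c, s)" "c \<in> S" "c \<in> T" "fwA c"
      "set s \<inter> T = {}" "s = [] \<longrightarrow> last ps = c" "s \<noteq> [] \<longrightarrow> last ps = last s \<and> ppl mvA (r c) (\<sigma> c) s"
      by blast
    have sne: "s \<noteq> []"
    proof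
      assume "s = []"
      then have "last ps = c" using P(7) by blast
      then show False using Tm[OF P(3) P(4)] e by simp
    qed
    have lS: "last ps \<in> S" using P(1) last_in_set[OF ne] by blast
    have ls': "last ps = last s" using P(8) sne by blast
    have lT: "last ps \<notin> T"
    proof
      assume "last ps \<in> T"
      then have "last s \<in> set s \<inter> T" using ls' last_in_set[OF sne] by simp
      then show False using P(6) by blast
    qed
    have W: "win mvA fwA iwA (r c) (\<sigma> c)" using sigw P(3,4,5) by blast
    have c1: "\<forall>ps. ppl mvA (r c) (\<sigma> c) ps \<longrightarrow> eve_pos (last ps) \<longrightarrow> mvA (last ps) \<noteq> {} \<longrightarrow> \<sigma> c ps \<in> mvA (last ps)"
      using W unfolding win_def by blast
    have pps: "ppl mvA (r c) (\<sigma> c) s" using P(8) sne by blast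
    have ag: "mv (last ps) = mvA (last ps)" by (rule agree[OF lS lT])
    have "\<sigma> c s \<in> mvA (last s)" using c1[rule_format, OF pps] e m ag ls' by simp
    moreover have "?f ps = \<sigma> c s" using P(2) by simp
    ultimately show "?f ps \<in> mv (last ps)" using ag ls' by simp
  next
    fix ps assume pp: "ppl mv c0 ?f ps" and m: "mv (last ps) = {}"
    have ne: "ps \<noteq> []" using pp ppl_ne by blast
    from inv[OF pp] obtain c s where P: "set ps \<subseteq> S" "lsplit T ps = (Some c, s)" "c \<in> S" "c \<in> T" "fwA c"
      "set s \<inter> T = {}" "s = [] \<longrightarrow> last ps = c" "s \<noteq> [] \<longrightarrow> last ps = last s \<and> ppl mvA (r c) (\<sigma> c) s"
      by blast
    have sne: "s \<noteq> []"
    proof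
      assume "s = []"
      then have "last ps = c" using P(7) by blast
      then show False using Tm[OF P(3) P(4)] m by simp
    qed
    have lS: "last ps \<in> S" using P(1) last_in_set[OF ne] by blast
    have ls': "last ps = last s" using P(8) sne by blast
    have lT: "last ps \<notin> T"
    proof
      assume "last ps \<in> T"
      then have "last s \<in> set s \<inter> T" using ls' last_in_set[OF sne] by simp
      then show False using P(6) by blast
    qed
    have W: "win mvA fwA iwA (r c) (\<sigma> c)" using sigw P(3,4,5) by blast
    have c2: "\<forall>ps. ppl mvA (r c) (\<sigma> c) ps \<longrightarrow> mvA (last ps) = {} \<longrightarrow> fwA (last ps)"
      using W unfolding win_def by blast
    have pps: "ppl mvA (r c) (\<sigma> c) s" using P(8) sne by blast
    have ag: "mv (last ps) = mvA (last ps)" by (rule agree[OF lS lT])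
    have "fwA (last s)" using c2[rule_format, OF pps] m ag ls' by simp
    then have "fwA (last ps)" using ls' by simp
    then show "fw (last ps)" using fwa[OF lS lT] by blast
  next
    fix p assume H: "\<forall>n. ppl mv c0 ?f (pref p n)"
    have stp: "p (Suc i) \<in> mv (p i)" for i using inf_ppl_step[OF H] .
    show "iw p"
    proof (cases "infinite {i. p i \<in> T}")
      case True then show ?thesis using iwT stp by blast
    next
      case False
      define K where "K = Max {i. p i \<in> T}"
      have p0: "p 0 = c0" using H[rule_format, of 0] by simp
      have KT: "p K \<in> T" using False K_def p0 c0(2) Max_in[of "{i. p i \<in> T}"] by auto
      have after: "K < i \<Longrightarrow> p i \<notin> T" for i
      proof
        assume "K < i" "p i \<in> T"
        then have "i \<le> K" using False K_def Max_ge[of "{i. p i \<in> T}" i] by simp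
        then show False using \<open>K < i\<close> by simp
      qed
      define q where "q = (\<lambda>i. p (i + Suc K))"
      have spl: "pref p (n + Suc K) = map p [0..<K] @ p K # pref q n" for n
        using pref_split[of p n "Suc K"] by (simp add: q_def)
      have qT: "set (pref q n) \<inter> T = {}" for n using after by (auto simp: set_pref q_def)
      have ls: "lsplit T (pref p (n + Suc K)) = (Some (p K), pref q n)" for n
        using spl lsplit_app[OF KT qT] by simp
      have Q: "p K \<in> S \<and> fwA (p K) \<and> ppl mvA (r (p K)) (\<sigma> (p K)) (pref q n)" for n
        using inv[OF H[rule_format, of "n + Suc K"]] ls[of n] by auto
      have "win mvA fwA iwA (r (p K)) (\<sigma> (p K))" using sigw Q[of 0] KT by blast
      then have "iwA q" using Q unfolding win_def by blast
      then show ?thesis using iwa q_def by blast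
    qed
  qed
qed



lemma sub_refl[simp]: "\<phi> \<in> sub \<phi>" by (cases \<phi>) auto

lemma sub_trans: "\<psi> \<in> sub \<phi> \<Longrightarrow> \<chi> \<in> sub \<psi> \<Longrightarrow> \<chi> \<in> sub \<phi>"
  by (induction \<phi>) auto

lemma binder_bvars: "Mu Z \<chi> \<in> sub \<phi> \<or> Nu Z \<chi> \<in> sub \<phi> \<Longrightarrow> Z \<in> set (bvars \<phi>)"
  by (induction \<phi>) auto

lemma bvars_binder: "Z \<in> set (bvars \<phi>) \<Longrightarrow> \<exists>\<chi>. Mu Z \<chi> \<in> sub \<phi> \<or> Nu Z \<chi> \<in> sub \<phi>"
  by (induction \<phi>) auto

lemma binder_unique: "distinct (bvars \<phi>) \<Longrightarrow> Mu Z \<chi>1 \<in> sub \<phi> \<or> Nu Z \<chi>1 \<in> sub \<phi> \<Longrightarrow>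
   Mu Z \<chi>2 \<in> sub \<phi> \<or> Nu Z \<chi>2 \<in> sub \<phi> \<Longrightarrow> \<chi>1 = \<chi>2"
proof (induction \<phi>)
  case (FConj p q)
  have d: "distinct (bvars p)" "distinct (bvars q)" "set (bvars p) \<inter> set (bvars q) = {}"
    using FConj.prems(1) by simp_all
  have b1: "(Mu Z \<chi>1 \<in> sub p \<or> Nu Z \<chi>1 \<in> sub p) \<or> (Mu Z \<chi>1 \<in> sub q \<or> Nu Z \<chi>1 \<in> sub q)"
    using FConj.prems(2) by auto
  have b2: "(Mu Z \<chi>2 \<in> sub p \<or> Nu Z \<chi>2 \<in> sub p) \<or> (Mu Z \<chi>2 \<in> sub q \<or> Nu Z \<chi>2 \<in> sub q)"
    using FConj.prems(3) by auto
  from b1 b2 show ?case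
  proof (elim disjE[of "_ \<or> _"])
    assume "Mu Z \<chi>1 \<in> sub p \<or> Nu Z \<chi>1 \<in> sub p" "Mu Z \<chi>2 \<in> sub p \<or> Nu Z \<chi>2 \<in> sub p"
    then show ?thesis using FConj.IH(1) d by blast
  next
    assume "Mu Z \<chi>1 \<in> sub q \<or> Nu Z \<chi>1 \<in> sub q" "Mu Z \<chi>2 \<in> sub q \<or> Nu Z \<chi>2 \<in> sub q"
    then show ?thesis using FConj.IH(2) d by blast
  next
    assume "Mu Z \<chi>1 \<in> sub p \<or> Nu Z \<chi>1 \<in> sub p" "Mu Z \<chi>2 \<in> sub q \<or> Nu Z \<chi>2 \<in> sub q"
    then have "Z \<in> set (bvars p)" "Z \<in> set (bvars q)" by (metis binder_bvars)+
    then show ?thesis using d by blast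
  next
    assume "Mu Z \<chi>1 \<in> sub q \<or> Nu Z \<chi>1 \<in> sub q" "Mu Z \<chi>2 \<in> sub p \<or> Nu Z \<chi>2 \<in> sub p"
    then have "Z \<in> set (bvars p)" "Z \<in> set (bvars q)" by (metis binder_bvars)+
    then show ?thesis using d by blast
  qed
next
  case (FDisj p q)
  have d: "distinct (bvars p)" "distinct (bvars q)" "set (bvars p) \<inter> set (bvars q) = {}"
    using FDisj.prems(1) by simp_all
  have b1: "(Mu Z \<chi>1 \<in> sub p \<or> Nu Z \<chi>1 \<in> sub p) \<or> (Mu Z \<chi>1 \<in> sub q \<or> Nu Z \<chi>1 \<in> sub q)"
    using FDisj.prems(2) by auto
  have b2: "(Mu Z \<chi>2 \<in> sub p \<or> Nu Z \<chi>2 \<in> sub p) \<or> (Mu Z \<chi>2 \<in> sub q \<or> Nu Z \<chi>2 \<in> sub q)"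
    using FDisj.prems(3) by auto
  from b1 b2 show ?case
  proof (elim disjE[of "_ \<or> _"])
    assume "Mu Z \<chi>1 \<in> sub p \<or> Nu Z \<chi>1 \<in> sub p" "Mu Z \<chi>2 \<in> sub p \<or> Nu Z \<chi>2 \<in> sub p"
    then show ?thesis using FDisj.IH(1) d by blast
  next
    assume "Mu Z \<chi>1 \<in> sub q \<or> Nu Z \<chi>1 \<in> sub q" "Mu Z \<chi>2 \<in> sub q \<or> Nu Z \<chi>2 \<in> sub q"
    then show ?thesis using FDisj.IH(2) d by blast
  next
    assume "Mu Z \<chi>1 \<in> sub p \<or> Nu Z \<chi>1 \<in> sub p" "Mu Z \<chi>2 \<in> sub q \<or> Nu Z \<chi>2 \<in> sub q"
    then have "Z \<in> set (bvars p)" "Z \<in> set (bvars q)" by (metis binder_bvars)+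
    then show ?thesis using d by blast
  next
    assume "Mu Z \<chi>1 \<in> sub q \<or> Nu Z \<chi>1 \<in> sub q" "Mu Z \<chi>2 \<in> sub p \<or> Nu Z \<chi>2 \<in> sub p"
    then have "Z \<in> set (bvars p)" "Z \<in> set (bvars q)" by (metis binder_bvars)+
    then show ?thesis using d by blast
  qed
next
  case (Mu Y p)
  have d: "distinct (bvars p)" "Y \<notin> set (bvars p)" using Mu.prems(1) by simp_all
  have bb: "\<chi> = p" if "Mu Z \<chi> \<in> sub (Mu Y p) \<or> Nu Z \<chi> \<in> sub (Mu Y p)" "Z = Y" for \<chi>
  proof -
    have "Mu Z \<chi> = Mu Y p \<or> Mu Z \<chi> \<in> sub p \<or> Nu Z \<chi> \<in> sub p" using that(1) by auto
    moreover have "\<not> (Mu Z \<chi> \<in> sub p \<or> Nu Z \<chi> \<in> sub p)" using binder_bvars[of Z \<chi> p] d(2) that(2) by blast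
    ultimately show ?thesis by simp
  qed
  show ?case
  proof (cases "Z = Y")
    case True then show ?thesis using bb Mu.prems by metis
  next
    case False
    then have "Mu Z \<chi>1 \<in> sub p \<or> Nu Z \<chi>1 \<in> sub p" "Mu Z \<chi>2 \<in> sub p \<or> Nu Z \<chi>2 \<in> sub p"
      using Mu.prems by auto
    then show ?thesis using Mu.IH d by blast
  qed
next
  case (Nu Y p)
  have d: "distinct (bvars p)" "Y \<notin> set (bvars p)" using Nu.prems(1) by simp_all
  have bb: "\<chi> = p" if "Mu Z \<chi> \<in> sub (Nu Y p) \<or> Nu Z \<chi> \<in> sub (Nu Y p)" "Z = Y" for \<chi>
  proof -
    have "Nu Z \<chi> = Nu Y p \<or> Mu Z \<chi> \<in> sub p \<or> Nu Z \<chi> \<in> sub p" using that(1) by auto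
    moreover have "\<not> (Mu Z \<chi> \<in> sub p \<or> Nu Z \<chi> \<in> sub p)" using binder_bvars[of Z \<chi> p] d(2) that(2) by blast
    ultimately show ?thesis by simp
  qed
  show ?case
  proof (cases "Z = Y")
    case True then show ?thesis using bb Nu.prems by metis
  next
    case False
    then have "Mu Z \<chi>1 \<in> sub p \<or> Nu Z \<chi>1 \<in> sub p" "Mu Z \<chi>2 \<in> sub p \<or> Nu Z \<chi>2 \<in> sub p"
      using Nu.prems by auto
    then show ?thesis using Nu.IH d by blast
  qed
qed simp_all

lemma body_eq: "distinct (bvars \<phi>) \<Longrightarrow> Mu Z \<chi> \<in> sub \<phi> \<or> Nu Z \<chi> \<in> sub \<phi> \<Longrightarrow> body \<phi> Z = \<chi>"
  unfolding body_def by (rule the_equality) (auto dest: binder_unique)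

lemma fvar_sub: "FVar Y \<in> sub \<psi> \<Longrightarrow> Y \<in> fvars \<psi> \<or> Y \<in> set (bvars \<psi>)"
  by (induction \<psi>) auto

lemma mv_FVar[simp]: "moves M \<phi> (H, FVar Z) = (if Z \<in> set (bvars \<phi>) then {(H, body \<phi> Z)} else {})"
  by (cases H) (simp add: moves_def)
lemma mv_FNeg[simp]: "moves M \<phi> (H, FNeg p) = {}"
  by (cases H) (simp add: moves_def)
lemma mv_FConj[simp]: "moves M \<phi> (H, FConj p q) = {(H,p),(H,q)}"
  by (cases H) (simp add: moves_def)
lemma mv_FDisj[simp]: "moves M \<phi> (H, FDisj p q) = {(H,p),(H,q)}"
  by (cases H) (simp add: moves_def)
lemma mv_DiaC[simp]: "moves M \<phi> ((R,t), DiaC a p) = {((Xs M (tgt r), Tr r), p) | r. r \<in> R \<and> lab r = a \<and> le_c M t r}"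
  by (simp add: moves_def)
lemma mv_BoxC[simp]: "moves M \<phi> ((R,t), BoxC a p) = {((Xs M (tgt r), Tr r), p) | r. r \<in> R \<and> lab r = a \<and> le_c M t r}"
  by (simp add: moves_def)
lemma mv_DiaNC[simp]: "moves M \<phi> ((R,t), DiaNC a p) = {((Xs M (tgt r), Tr r), p) | r. r \<in> R \<and> lab r = a \<and> ominus M t r}"
  by (simp add: moves_def)
lemma mv_BoxNC[simp]: "moves M \<phi> ((R,t), BoxNC a p) = {((Xs M (tgt r), Tr r), p) | r. r \<in> R \<and> lab r = a \<and> ominus M t r}"
  by (simp add: moves_def)
lemma mv_DiaOt[simp]: "moves M \<phi> ((R,t), DiaOt p) = {((N,t), p) | N. N \<in> calX M \<and> sqsub M N R}"
  by (simp add: moves_def)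
lemma mv_BoxOt[simp]: "moves M \<phi> ((R,t), BoxOt p) = {((N,t), p) | N. N \<in> calX M \<and> sqsub M N R}"
  by (simp add: moves_def)
lemma mv_Mu[simp]: "moves M \<phi> (H, Mu Z p) = {(H, FVar Z)}"
  by (cases H) (simp add: moves_def)
lemma mv_Nu[simp]: "moves M \<phi> (H, Nu Z p) = {(H, FVar Z)}"
  by (cases H) (simp add: moves_def)

lemma moves_indep: "(\<And>Z. snd c \<noteq> FVar Z) \<Longrightarrow> moves M \<phi> c = moves M \<psi> c"
  by (cases c) (auto simp: moves_def split: tfl.splits)

lemma moves_child:
  assumes "c' \<in> moves M \<psi> ((R,t),\<chi>)" "\<And>Y. \<chi> \<noteq> FVar Y"
  shows "snd c' \<in> sub \<chi> \<or> (\<exists>Y p. (\<chi> = Mu Y p \<or> \<chi> = Nu Y p) \<and> snd c' = FVar Y)"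
proof (cases \<chi>)
  case (FVar x1) then show ?thesis using assms(2) by blast
next
  case (FNeg x2) then show ?thesis using assms(1) by simp
next
  case (FConj x31 x32) then show ?thesis using assms(1) by auto
next
  case (FDisj x41 x42) then show ?thesis using assms(1) by auto
next
  case (DiaC x51 x52) then show ?thesis using assms(1) by auto
next
  case (BoxC x61 x62) then show ?thesis using assms(1) by auto
next
  case (DiaNC x71 x72) then show ?thesis using assms(1) by auto
next
  case (BoxNC x81 x82) then show ?thesis using assms(1) by auto
next
  case (DiaOt x9) then show ?thesis using assms(1) by auto
next
  case (BoxOt x10) then show ?thesis using assms(1) by auto
next
  case (Mu x111 x112) then show ?thesis using assms(1) by auto
next
  case (Nu x121 x122) then show ?thesis using assms(1) by auto
qed

definition xsub :: "('a,'v) tfl \<Rightarrow> ('a,'v) tfl set" where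
  "xsub \<psi> = sub \<psi> \<union> FVar ` set (bvars \<psi>)"

lemma moves_closed:
  assumes d: "distinct (bvars \<psi>)" and c: "snd c \<in> xsub \<psi>" and c': "c' \<in> moves M \<psi> c"
  shows "snd c' \<in> xsub \<psi>"
proof -
  obtain R t \<chi> where C: "c = ((R,t),\<chi>)" by (metis prod.collapse)
  show ?thesis
  proof (cases "\<exists>Y. \<chi> = FVar Y")
    case True
    then obtain Y where FVar: "\<chi> = FVar Y" by blast
    show ?thesis
    proof (cases "Y \<in> set (bvars \<psi>)")
      case True
      then obtain \<chi>1 where B: "Mu Y \<chi>1 \<in> sub \<psi> \<or> Nu Y \<chi>1 \<in> sub \<psi>" using bvars_binder[OF True] by blast
      then have "body \<psi> Y = \<chi>1" using body_eq[OF d B] by blast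
      moreover have "\<chi>1 \<in> sub \<psi>" using B sub_trans[of "Mu Y \<chi>1" \<psi> \<chi>1] sub_trans[of "Nu Y \<chi>1" \<psi> \<chi>1] by auto
      ultimately show ?thesis using c' C FVar True by (simp add: xsub_def)
    next
      case False then show ?thesis using c' C FVar by simp
    qed
  next
    case False
    then have cs: "\<chi> \<in> sub \<psi>" using c C unfolding xsub_def by force
    from False have "snd c' \<in> sub \<chi> \<or> (\<exists>Y p. (\<chi> = Mu Y p \<or> \<chi> = Nu Y p) \<and> snd c' = FVar Y)"
      using moves_child[of c' M \<psi> R t \<chi>] c' C by blast
    then show ?thesis
    proof
      assume "snd c' \<in> sub \<chi>" then show ?thesis using sub_trans[OF cs] unfolding xsub_def by blast
    next
      assume "\<exists>Y p. (\<chi> = Mu Y p \<or> \<chi> = Nu Y p) \<and> snd c' = FVar Y"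
      then obtain Y p where "\<chi> = Mu Y p \<or> \<chi> = Nu Y p" "snd c' = FVar Y" by blast
      then have "Mu Y p \<in> sub \<psi> \<or> Nu Y p \<in> sub \<psi>" using cs by blast
      then have "Y \<in> set (bvars \<psi>)" by (rule binder_bvars)
      then show ?thesis using \<open>snd c' = FVar Y\<close> by (simp add: xsub_def)
    qed
  qed
qed

lemma moves_agree:
  assumes dP: "distinct (bvars \<Phi>)" and dp: "distinct (bvars \<psi>)" and s: "\<psi> \<in> sub \<Phi>"
    and Y: "\<And>Y. snd c = FVar Y \<Longrightarrow> Y \<in> set (bvars \<Phi>) \<Longrightarrow> Y \<in> set (bvars \<psi>)"
  shows "moves M \<Phi> c = moves M \<psi> c"
proof (cases "\<exists>Y. snd c = FVar Y")
  case False
  show ?thesis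
  proof (rule moves_indep)
    fix Z show "snd c \<noteq> FVar Z" using False by blast
  qed
next
  case True
  then obtain H Y where C: "c = (H, FVar Y)" by (metis prod.collapse)
  show ?thesis
  proof (cases "Y \<in> set (bvars \<psi>)")
    case True
    then obtain \<chi>1 where B: "Mu Y \<chi>1 \<in> sub \<psi> \<or> Nu Y \<chi>1 \<in> sub \<psi>" using bvars_binder[OF True] by blast
    then have b1: "body \<psi> Y = \<chi>1" using body_eq[OF dp B] by blast
    have B2: "Mu Y \<chi>1 \<in> sub \<Phi> \<or> Nu Y \<chi>1 \<in> sub \<Phi>" using B sub_trans[OF s] by blast
    then have b2: "body \<Phi> Y = \<chi>1" using body_eq[OF dP B2] by blast
    have "Y \<in> set (bvars \<Phi>)" using binder_bvars[OF B2] .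
    then show ?thesis using C True b1 b2 by simp
  next
    case False
    then have "Y \<notin> set (bvars \<Phi>)" using Y C by auto
    then show ?thesis using C False by simp
  qed
qed

lemma inf_shift: "infinite {i. P (i + k)} \<longleftrightarrow> infinite {i::nat. P i}"
proof
  assume H: "infinite {i. P (i + k)}"
  show "infinite {i. P i}" unfolding infinite_nat_iff_unbounded
  proof
    fix m
    obtain n where "n > m" "P (n + k)" using H unfolding infinite_nat_iff_unbounded by blast
    then show "\<exists>n>m. n \<in> {i. P i}" by (intro exI[of _ "n + k"]) auto
  qed
next
  assume H: "infinite {i. P i}"
  show "infinite {i. P (i + k)}" unfolding infinite_nat_iff_unbounded
  proof
    fix m
    obtain n where "n > m + k" "P n" using H unfolding infinite_nat_iff_unbounded by blast
    then show "\<exists>n>m. n \<in> {i. P (i + k)}" by (intro exI[of _ "n - k"]) auto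
  qed
qed

lemma iov_shift: "inf_often_var (\<lambda>n. p (n + k)) Z \<longleftrightarrow> inf_often_var p Z"
  unfolding inf_often_var_def using inf_shift[of "\<lambda>i. snd (p i) = FVar Z" k] by simp

lemma ewi_shift: "eve_wins_inf \<phi> (\<lambda>n. p (n + k)) \<longleftrightarrow> eve_wins_inf \<phi> p"
  unfolding eve_wins_inf_def iov_shift ..

lemma ewi_mono: "\<psi> \<in> sub \<phi> \<Longrightarrow> eve_wins_inf \<psi> p \<Longrightarrow> eve_wins_inf \<phi> p"
  unfolding eve_wins_inf_def by (meson sub_trans)

lemma ewi_nu:
  assumes d: "distinct (bvars (Nu Z \<psi>))" and inf: "infinite {i. snd (p i) = FVar Z}"
    and st: "\<And>i. p (Suc i) \<in> moves M (Nu Z \<psi>) (p i)"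
  shows "eve_wins_inf (Nu Z \<psi>) p"
  unfolding eve_wins_inf_def
proof (rule exI[of _ Z], rule exI[of _ \<psi>], intro conjI allI impI)
  show "Nu Z \<psi> \<in> sub (Nu Z \<psi>)" by simp
  show "inf_often_var p Z" using inf by (simp add: inf_often_var_def)
  fix Z' assume "inf_often_var p Z'"
  then have "{i. snd (p i) = FVar Z'} \<noteq> {}" unfolding inf_often_var_def using infinite_imp_nonempty by blast
  then obtain i where i: "snd (p i) = FVar Z'" by blast
  then obtain H where C: "p i = (H, FVar Z')" by (metis prod.collapse)
  have "Z' \<in> set (bvars (Nu Z \<psi>))"
  proof (rule ccontr)
    assume "Z' \<notin> set (bvars (Nu Z \<psi>))"
    then show False using st[of i] C by simp
  qed
  then show "\<exists>\<chi>'. Mu Z' \<chi>' \<in> sub (Nu Z \<psi>) \<or> Nu Z' \<chi>' \<in> sub (Nu Z \<psi>)" by (rule bvars_binder)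
qed

lemma ewf_upd: "snd c \<noteq> FVar Z \<Longrightarrow> snd c \<noteq> FNeg (FVar Z) \<Longrightarrow>
    eve_wins_final (V(Z := Q)) c = eve_wins_final V c"
  by (cases c) (auto simp: eve_wins_final_def split: tfl.splits)

lemma ewf_FVar[simp]: "eve_wins_final V (H, FVar Z) = (H \<in> V Z)"
  by (cases H) (simp add: eve_wins_final_def)

lemma sem_procs: "(\<forall>Z. V Z \<subseteq> procs M) \<Longrightarrow> sem M V \<phi> \<subseteq> procs M"
proof (induction \<phi> arbitrary: V)
  case (Mu Z p)
  have "sem M (V(Z := procs M)) p \<subseteq> procs M" using Mu by auto
  then show ?case by auto
qed (auto simp: dia_c_def dia_nc_def dia_ot_def)

lemma dia_c_mono: "X \<subseteq> Y \<Longrightarrow> dia_c M a X \<subseteq> dia_c M a Y" by (auto simp: dia_c_def)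
lemma dia_nc_mono: "X \<subseteq> Y \<Longrightarrow> dia_nc M a X \<subseteq> dia_nc M a Y" by (auto simp: dia_nc_def)
lemma dia_ot_mono: "X \<subseteq> Y \<Longrightarrow> dia_ot M X \<subseteq> dia_ot M Y" by (fastforce simp: dia_ot_def)

lemma sem_mono: "neg_on_vars \<psi> \<Longrightarrow> FNeg (FVar Z) \<notin> sub \<psi> \<Longrightarrow> A \<subseteq> B \<Longrightarrow>
   sem M (V(Z := A)) \<psi> \<subseteq> sem M (V(Z := B)) \<psi>"
proof (induction \<psi> arbitrary: V)
  case (FNeg p)
  then obtain Y where "p = FVar Y" by auto
  with FNeg show ?case by auto
next
  case (FConj p q)
  have "sem M (V(Z:=A)) p \<subseteq> sem M (V(Z:=B)) p" by (rule FConj.IH(1)) (use FConj.prems in auto)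
  moreover have "sem M (V(Z:=A)) q \<subseteq> sem M (V(Z:=B)) q" by (rule FConj.IH(2)) (use FConj.prems in auto)
  ultimately show ?case by (simp only: sem.simps) blast
next
  case (FDisj p q)
  have "sem M (V(Z:=A)) p \<subseteq> sem M (V(Z:=B)) p" by (rule FDisj.IH(1)) (use FDisj.prems in auto)
  moreover have "sem M (V(Z:=A)) q \<subseteq> sem M (V(Z:=B)) q" by (rule FDisj.IH(2)) (use FDisj.prems in auto)
  ultimately show ?case by (simp only: sem.simps) blast
next
  case (DiaC a p)
  have "sem M (V(Z:=A)) p \<subseteq> sem M (V(Z:=B)) p" by (rule DiaC.IH) (use DiaC.prems in auto)
  then show ?case by (simp only: sem.simps) (rule dia_c_mono)
next
  case (BoxC a p)
  have "sem M (V(Z:=A)) p \<subseteq> sem M (V(Z:=B)) p" by (rule BoxC.IH) (use BoxC.prems in auto)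
  then have "procs M - sem M (V(Z := B)) p \<subseteq> procs M - sem M (V(Z := A)) p" by blast
  then have "dia_c M a (procs M - sem M (V(Z := B)) p) \<subseteq> dia_c M a (procs M - sem M (V(Z := A)) p)" by (rule dia_c_mono)
  then show ?case by (simp only: sem.simps) blast
next
  case (DiaNC a p)
  have "sem M (V(Z:=A)) p \<subseteq> sem M (V(Z:=B)) p" by (rule DiaNC.IH) (use DiaNC.prems in auto)
  then show ?case by (simp only: sem.simps) (rule dia_nc_mono)
next
  case (BoxNC a p)
  have "sem M (V(Z:=A)) p \<subseteq> sem M (V(Z:=B)) p" by (rule BoxNC.IH) (use BoxNC.prems in auto)
  then have "procs M - sem M (V(Z := B)) p \<subseteq> procs M - sem M (V(Z := A)) p" by blast
  then have "dia_nc M a (procs M - sem M (V(Z := B)) p) \<subseteq> dia_nc M a (procs M - sem M (V(Z := A)) p)" by (rule dia_nc_mono)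
  then show ?case by (simp only: sem.simps) blast
next
  case (DiaOt p)
  have "sem M (V(Z:=A)) p \<subseteq> sem M (V(Z:=B)) p" by (rule DiaOt.IH) (use DiaOt.prems in auto)
  then show ?case by (simp only: sem.simps) (rule dia_ot_mono)
next
  case (BoxOt p)
  have "sem M (V(Z:=A)) p \<subseteq> sem M (V(Z:=B)) p" by (rule BoxOt.IH) (use BoxOt.prems in auto)
  then have "procs M - sem M (V(Z := B)) p \<subseteq> procs M - sem M (V(Z := A)) p" by blast
  then have "dia_ot M (procs M - sem M (V(Z := B)) p) \<subseteq> dia_ot M (procs M - sem M (V(Z := A)) p)" by (rule dia_ot_mono)
  then show ?case by (simp only: sem.simps) blast
next
  case (Mu Y p)
  show ?case
  proof (cases "Y = Z")
    case True then show ?thesis by (simp only: sem.simps True fun_upd_upd order_refl)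
  next
    case False
    have "sem M (V(Y := Q, Z := A)) p \<subseteq> sem M (V(Y := Q, Z := B)) p" for Q
      by (rule Mu.IH) (use Mu.prems in auto)
    then have "sem M (V(Z := A, Y := Q)) p \<subseteq> sem M (V(Z := B, Y := Q)) p" for Q
      using False by (simp add: fun_upd_twist)
    then have "{Q. Q \<subseteq> procs M \<and> sem M (V(Z := B, Y := Q)) p \<subseteq> Q} \<subseteq>
       {Q. Q \<subseteq> procs M \<and> sem M (V(Z := A, Y := Q)) p \<subseteq> Q}" by blast
    then show ?thesis by (simp only: sem.simps) (rule Inter_anti_mono)
  qed
next
  case (Nu Y p)
  show ?case
  proof (cases "Y = Z")
    case True then show ?thesis by (simp only: sem.simps True fun_upd_upd order_refl)
  next
    case False
    have "sem M (V(Y := Q, Z := A)) p \<subseteq> sem M (V(Y := Q, Z := B)) p" for Q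
      by (rule Nu.IH) (use Nu.prems in auto)
    then have "sem M (V(Z := A, Y := Q)) p \<subseteq> sem M (V(Z := B, Y := Q)) p" for Q
      using False by (simp add: fun_upd_twist)
    then have "{Q. Q \<subseteq> procs M \<and> procs M - sem M (V(Z := A, Y := procs M - Q)) p \<subseteq> Q} \<subseteq>
       {Q. Q \<subseteq> procs M \<and> procs M - sem M (V(Z := B, Y := procs M - Q)) p \<subseteq> Q}" by blast
    then have "\<Inter>{Q. Q \<subseteq> procs M \<and> procs M - sem M (V(Z := B, Y := procs M - Q)) p \<subseteq> Q} \<subseteq>
       \<Inter>{Q. Q \<subseteq> procs M \<and> procs M - sem M (V(Z := A, Y := procs M - Q)) p \<subseteq> Q}" by (rule Inter_anti_mono)
    then show ?thesis by (simp only: sem.simps) blast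
  qed
qed simp

lemma calX_trans: "N \<in> calX M \<Longrightarrow> N \<subseteq> trans M"
  by (auto simp: calX_def Xs_def support_set_def conflict_free_def)

lemma procs_step: "is_tsi M \<Longrightarrow> (R,t) \<in> procs M \<Longrightarrow> r \<in> R \<Longrightarrow> (Xs M (tgt r), Tr r) \<in> procs M"
proof -
  assume M: "is_tsi M" and H: "(R,t) \<in> procs M" and r: "r \<in> R"
  have "r \<in> trans M" using H r calX_trans by (auto simp: procs_def)
  then have "tgt r \<in> states M" using M by (auto simp: is_tsi_def tgt_def)
  then have "Xs M (tgt r) \<in> calX M" by (auto simp: calX_def)
  moreover have "Tr r \<in> acts M" using \<open>r \<in> trans M\<close> by (simp add: acts_def)
  ultimately show ?thesis by (simp add: procs_def)
qed

lemma procs_ot: "(R,t) \<in> procs M \<Longrightarrow> N \<in> calX M \<Longrightarrow> (N,t) \<in> procs M"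
  by (simp add: procs_def)



lemma win_prepend_ex:
  assumes A1: "eve_pos c0 \<Longrightarrow> \<exists>ch\<in>mv c0. \<exists>g. win mv fw iw ch g"
    and A2: "\<not> eve_pos c0 \<Longrightarrow> \<forall>c1\<in>mv c0. \<exists>g. win mv fw iw c1 g"
    and A3: "mv c0 = {} \<Longrightarrow> fw c0"
    and A4: "\<And>p. iw (\<lambda>n. p (n + 1)) \<Longrightarrow> iw p"
  shows "\<exists>f. win mv fw iw c0 f"
proof (cases "eve_pos c0")
  case True
  then obtain ch g where ch: "ch \<in> mv c0" "win mv fw iw ch g" using A1 by blast
  have "win mv fw iw c0 (\<lambda>ps. if length ps \<le> 1 then ch else (\<lambda>_. g) (ps ! 1) (tl ps))"
  proof (rule win_prepend)
    show "ch \<in> mv c0" by (rule ch(1))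
    fix c1 assume "c1 \<in> mv c0" "eve_pos c0 \<Longrightarrow> c1 = ch"
    then show "win mv fw iw c1 g" using ch True by simp
  qed (use A3 A4 in auto)
  then show ?thesis by blast
next
  case False
  define F where "F = (\<lambda>c. SOME g. win mv fw iw c g)"
  have "win mv fw iw c0 (\<lambda>ps. if length ps \<le> 1 then undefined else F (ps ! 1) (tl ps))"
  proof (rule win_prepend)
    fix c1 assume "c1 \<in> mv c0"
    then have "\<exists>g. win mv fw iw c1 g" using A2 False by blast
    then show "win mv fw iw c1 (F c1)" unfolding F_def by (rule someI_ex)
  qed (use False A3 A4 in auto)
  then show ?thesis by blast
qed

lemma lift:
  assumes dP: "distinct (bvars \<Phi>)" and dc: "distinct (bvars \<chi>)" and s: "\<chi> \<in> sub \<Phi>"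
    and Y: "\<And>Y. Y \<in> set (bvars \<Phi>) \<Longrightarrow> FVar Y \<in> xsub \<chi> \<Longrightarrow> Y \<in> set (bvars \<chi>)"
    and w: "win (moves M \<chi>) fw (eve_wins_inf \<chi>) (H, \<chi>) g"
  shows "\<exists>g'. win (moves M \<Phi>) fw (eve_wins_inf \<Phi>) (H, \<chi>) g'"
proof -
  have "win (moves M \<Phi>) fw (eve_wins_inf \<Phi>) (H, \<chi>)
     (\<lambda>ps. case fsplit {} ps of None \<Rightarrow> g ps | Some s \<Rightarrow> (\<lambda>_. g) (hd s) s)"
  proof (rule win_switch[where S = "{c. snd c \<in> xsub \<chi>}" and mvA = "moves M \<chi>" and fwA = fw
        and iwA = "eve_wins_inf \<chi>"])
    show "(H, \<chi>) \<in> {c. snd c \<in> xsub \<chi>}" by (simp add: xsub_def)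
    show "moves M \<chi> c \<subseteq> {c. snd c \<in> xsub \<chi>}" if "c \<in> {c. snd c \<in> xsub \<chi>}" for c
      using moves_closed[OF dc] that by blast
    show "moves M \<Phi> c = moves M \<chi> c" if "c \<in> {c. snd c \<in> xsub \<chi>}" "c \<notin> {}" for c
    proof (rule moves_agree[OF dP dc s])
      fix Y assume "snd c = FVar Y" "Y \<in> set (bvars \<Phi>)"
      then show "Y \<in> set (bvars \<chi>)" using Y that(1) by simp
    qed
    show "win (moves M \<chi>) fw (eve_wins_inf \<chi>) (H, \<chi>) g" by (rule w)
    show "eve_wins_inf \<Phi> p" if "eve_wins_inf \<chi> p" for p using ewi_mono[OF s that] .
    show "eve_wins_inf \<Phi> p" if "eve_wins_inf \<Phi> (\<lambda>n. p (n + k))" for p k using that ewi_shift by blast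
  qed auto
  then show ?thesis by blast
qed

lemma child_Y: "pnf \<Phi> \<Longrightarrow> fvars \<chi> \<subseteq> fvars \<Phi> \<Longrightarrow> Y \<in> set (bvars \<Phi>) \<Longrightarrow> FVar Y \<in> xsub \<chi>
   \<Longrightarrow> Y \<in> set (bvars \<chi>)"
proof -
  assume P: "pnf \<Phi>" and F: "fvars \<chi> \<subseteq> fvars \<Phi>" and Yb: "Y \<in> set (bvars \<Phi>)" and X: "FVar Y \<in> xsub \<chi>"
  have D: "set (bvars \<Phi>) \<inter> fvars \<Phi> = {}" using P by (simp add: pnf_def)
  from X have "FVar Y \<in> sub \<chi> \<or> Y \<in> set (bvars \<chi>)" unfolding xsub_def by auto
  then show "Y \<in> set (bvars \<chi>)"
  proof
    assume "FVar Y \<in> sub \<chi>"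
    then have "Y \<in> fvars \<chi> \<or> Y \<in> set (bvars \<chi>)" by (rule fvar_sub)
    then show ?thesis using F Yb D by blast
  qed
qed

lemma child_win:
  assumes "pnf \<Phi>" "pnf \<chi>" "\<chi> \<in> sub \<Phi>" "fvars \<chi> \<subseteq> fvars \<Phi>"
    and "\<exists>g. win (moves M \<chi>) (eve_wins_final V) (eve_wins_inf \<chi>) (H, \<chi>) g"
  shows "\<exists>g. win (moves M \<Phi>) (eve_wins_final V) (eve_wins_inf \<Phi>) (H, \<chi>) g"
proof -
  obtain g where g: "win (moves M \<chi>) (eve_wins_final V) (eve_wins_inf \<chi>) (H, \<chi>) g" using assms(5) by blast
  show ?thesis
  proof (rule lift[OF _ _ assms(3) _ g])
    show "distinct (bvars \<Phi>)" using assms(1) by (simp add: pnf_def)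
    show "distinct (bvars \<chi>)" using assms(2) by (simp add: pnf_def)
    fix Y assume "Y \<in> set (bvars \<Phi>)" "FVar Y \<in> xsub \<chi>"
    then show "Y \<in> set (bvars \<chi>)" using child_Y[OF assms(1) assms(4)] by blast
  qed
qed

lemma ewi_s1: "eve_wins_inf \<phi> (\<lambda>n. p (n + 1)) \<Longrightarrow> eve_wins_inf \<phi> p"
  using ewi_shift by blast

lemma ewf_FNeg[simp]: "eve_wins_final V (H, FNeg (FVar Y)) = (H \<notin> V Y)"
  by (cases H) (simp add: eve_wins_final_def)

lemma pnf_FConj: "pnf (FConj p q) \<Longrightarrow> pnf p \<and> pnf q" unfolding pnf_def by auto
lemma pnf_FDisj: "pnf (FDisj p q) \<Longrightarrow> pnf p \<and> pnf q" unfolding pnf_def by auto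
lemma pnf_DiaC: "pnf (DiaC a p) \<Longrightarrow> pnf p" unfolding pnf_def by auto
lemma pnf_BoxC: "pnf (BoxC a p) \<Longrightarrow> pnf p" unfolding pnf_def by auto
lemma pnf_DiaNC: "pnf (DiaNC a p) \<Longrightarrow> pnf p" unfolding pnf_def by auto
lemma pnf_BoxNC: "pnf (BoxNC a p) \<Longrightarrow> pnf p" unfolding pnf_def by auto
lemma pnf_DiaOt: "pnf (DiaOt p) \<Longrightarrow> pnf p" unfolding pnf_def by auto
lemma pnf_BoxOt: "pnf (BoxOt p) \<Longrightarrow> pnf p" unfolding pnf_def by auto
lemma pnf_Mu: "pnf (Mu Z p) \<Longrightarrow> pnf p" unfolding pnf_def by auto
lemma pnf_Nu: "pnf (Nu Z p) \<Longrightarrow> pnf p" unfolding pnf_def by auto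



lemma ep_simps[simp]:
  "eve_pos (H, FVar Z) = False" "eve_pos (H, FNeg p) = False" "eve_pos (H, FConj p q) = False"
  "eve_pos (H, FDisj p q) = True" "eve_pos (H, DiaC a p) = True" "eve_pos (H, BoxC a p) = False"
  "eve_pos (H, DiaNC a p) = True" "eve_pos (H, BoxNC a p) = False"
  "eve_pos (H, DiaOt p) = True" "eve_pos (H, BoxOt p) = False"
  "eve_pos (H, Mu Z p) = False" "eve_pos (H, Nu Z p) = False"
  by (simp_all add: eve_pos_def)

lemma ewf_Box[simp]:
  "eve_wins_final V (H, BoxC a p)" "eve_wins_final V (H, BoxNC a p)" "eve_wins_final V (H, BoxOt p)"
  by (cases H, simp add: eve_wins_final_def)+

lemma main:
  fixes M :: "('s,'a) tsi" and V :: "'v \<Rightarrow> ('s,'a) proc set" and \<psi> :: "('a,'v) tfl"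
  assumes M: "is_tsi M"
  shows "pnf \<psi> \<Longrightarrow> (\<forall>Z. V Z \<subseteq> procs M) \<Longrightarrow> H \<in> sem M V \<psi> \<Longrightarrow>
    \<exists>f. win (moves M \<psi>) (eve_wins_final V) (eve_wins_inf \<psi>) (H, \<psi>) f"
proof (induction \<psi> arbitrary: V H)
  case (FVar Z)
  show ?case
    by (rule win_prepend_ex) (use FVar.prems in \<open>auto intro: ewi_s1\<close>)
next
  case (FNeg p)
  then obtain Y where p: "p = FVar Y" by (auto simp: pnf_def)
  show ?case
    by (rule win_prepend_ex) (use FNeg.prems p in \<open>auto intro: ewi_s1\<close>)
next
  case (FConj p q)
  have pp: "pnf p" "pnf q" using pnf_FConj[OF FConj.prems(1)] by auto
  have w1: "\<exists>g. win (moves M (FConj p q)) (eve_wins_final V) (eve_wins_inf (FConj p q)) (H, p) g"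
    by (rule child_win[OF FConj.prems(1) pp(1)]) (use FConj.IH(1) pp FConj.prems in auto)
  have w2: "\<exists>g. win (moves M (FConj p q)) (eve_wins_final V) (eve_wins_inf (FConj p q)) (H, q) g"
    by (rule child_win[OF FConj.prems(1) pp(2)]) (use FConj.IH(2) pp FConj.prems in auto)
  show ?case by (rule win_prepend_ex) (use w1 w2 in \<open>auto intro: ewi_s1\<close>)
next
  case (FDisj p q)
  have pp: "pnf p" "pnf q" using pnf_FDisj[OF FDisj.prems(1)] by auto
  have "H \<in> sem M V p \<or> H \<in> sem M V q" using FDisj.prems(3) by auto
  then show ?case
  proof
    assume h: "H \<in> sem M V p"
    have w1: "\<exists>g. win (moves M (FDisj p q)) (eve_wins_final V) (eve_wins_inf (FDisj p q)) (H, p) g"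
      by (rule child_win[OF FDisj.prems(1) pp(1)]) (use FDisj.IH(1) pp FDisj.prems h in auto)
    show ?case by (rule win_prepend_ex) (use w1 in \<open>auto intro: ewi_s1\<close>)
  next
    assume h: "H \<in> sem M V q"
    have w1: "\<exists>g. win (moves M (FDisj p q)) (eve_wins_final V) (eve_wins_inf (FDisj p q)) (H, q) g"
      by (rule child_win[OF FDisj.prems(1) pp(2)]) (use FDisj.IH(2) pp FDisj.prems h in auto)
    show ?case by (rule win_prepend_ex) (use w1 in \<open>auto intro: ewi_s1\<close>)
  qed
next
  case (DiaC a p)
  have pp: "pnf p" using pnf_DiaC[OF DiaC.prems(1)] .
  obtain R t where Ht: "H = (R,t)" by (cases H)
  from DiaC.prems(3) Ht obtain r where r: "r \<in> R" "lab r = a" "le_c M t r" "(Xs M (tgt r), Tr r) \<in> sem M V p"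
    by (auto simp: dia_c_def)
  have w1: "\<exists>g. win (moves M (DiaC a p)) (eve_wins_final V) (eve_wins_inf (DiaC a p)) ((Xs M (tgt r), Tr r), p) g"
    by (rule child_win[OF DiaC.prems(1) pp]) (use DiaC.IH pp DiaC.prems r in auto)
  have ch: "((Xs M (tgt r), Tr r), p) \<in> moves M (DiaC a p) (H, DiaC a p)"
    unfolding Ht mv_DiaC using r by blast
  show ?case by (rule win_prepend_ex) (use w1 ch in \<open>auto intro: ewi_s1\<close>)
next
  case (DiaNC a p)
  have pp: "pnf p" using pnf_DiaNC[OF DiaNC.prems(1)] .
  obtain R t where Ht: "H = (R,t)" by (cases H)
  from DiaNC.prems(3) Ht obtain r where r: "r \<in> R" "lab r = a" "ominus M t r" "(Xs M (tgt r), Tr r) \<in> sem M V p"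
    by (auto simp: dia_nc_def)
  have w1: "\<exists>g. win (moves M (DiaNC a p)) (eve_wins_final V) (eve_wins_inf (DiaNC a p)) ((Xs M (tgt r), Tr r), p) g"
    by (rule child_win[OF DiaNC.prems(1) pp]) (use DiaNC.IH pp DiaNC.prems r in auto)
  have ch: "((Xs M (tgt r), Tr r), p) \<in> moves M (DiaNC a p) (H, DiaNC a p)"
    unfolding Ht mv_DiaNC using r by blast
  show ?case by (rule win_prepend_ex) (use w1 ch in \<open>auto intro: ewi_s1\<close>)
next
  case (DiaOt p)
  have pp: "pnf p" using pnf_DiaOt[OF DiaOt.prems(1)] .
  obtain R t where Ht: "H = (R,t)" by (cases H)
  from DiaOt.prems(3) Ht obtain N where r: "N \<in> calX M" "sqsub M N R" "(N, t) \<in> sem M V p"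
    by (auto simp: dia_ot_def)
  have w1: "\<exists>g. win (moves M (DiaOt p)) (eve_wins_final V) (eve_wins_inf (DiaOt p)) ((N, t), p) g"
    by (rule child_win[OF DiaOt.prems(1) pp]) (use DiaOt.IH pp DiaOt.prems r in auto)
  have ch: "((N, t), p) \<in> moves M (DiaOt p) (H, DiaOt p)"
    unfolding Ht mv_DiaOt using r by blast
  show ?case by (rule win_prepend_ex) (use w1 ch in \<open>auto intro: ewi_s1\<close>)
next
  case (BoxC a p)
  have pp: "pnf p" using pnf_BoxC[OF BoxC.prems(1)] .
  obtain R t where Ht: "H = (R,t)" by (cases H)
  have Hp: "(R,t) \<in> procs M" "(R,t) \<notin> dia_c M a (procs M - sem M V p)" using BoxC.prems(3) Ht by auto
  have all: "\<forall>c1\<in>moves M (BoxC a p) (H, BoxC a p).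
     \<exists>g. win (moves M (BoxC a p)) (eve_wins_final V) (eve_wins_inf (BoxC a p)) c1 g"
  proof
    fix c1 assume "c1 \<in> moves M (BoxC a p) (H, BoxC a p)"
    then obtain r where r: "c1 = ((Xs M (tgt r), Tr r), p)" "r \<in> R" "lab r = a" "le_c M t r"
      using Ht by auto
    have pr: "(Xs M (tgt r), Tr r) \<in> procs M" using procs_step[OF M Hp(1) r(2)] .
    have s0: "(Xs M (tgt r), Tr r) \<in> sem M V p"
    proof (rule ccontr)
      assume "(Xs M (tgt r), Tr r) \<notin> sem M V p"
      then have "(R,t) \<in> dia_c M a (procs M - sem M V p)" using Hp(1) r pr unfolding dia_c_def by blast
      then show False using Hp(2) by blast
    qed
    show "\<exists>g. win (moves M (BoxC a p)) (eve_wins_final V) (eve_wins_inf (BoxC a p)) c1 g"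
      unfolding r(1) by (rule child_win[OF BoxC.prems(1) pp]) (use BoxC.IH pp BoxC.prems s0 in auto)
  qed
  show ?case by (rule win_prepend_ex) (use all in \<open>auto intro: ewi_s1\<close>)
next
  case (BoxNC a p)
  have pp: "pnf p" using pnf_BoxNC[OF BoxNC.prems(1)] .
  obtain R t where Ht: "H = (R,t)" by (cases H)
  have Hp: "(R,t) \<in> procs M" "(R,t) \<notin> dia_nc M a (procs M - sem M V p)" using BoxNC.prems(3) Ht by auto
  have all: "\<forall>c1\<in>moves M (BoxNC a p) (H, BoxNC a p).
     \<exists>g. win (moves M (BoxNC a p)) (eve_wins_final V) (eve_wins_inf (BoxNC a p)) c1 g"
  proof
    fix c1 assume "c1 \<in> moves M (BoxNC a p) (H, BoxNC a p)"
    then obtain r where r: "c1 = ((Xs M (tgt r), Tr r), p)" "r \<in> R" "lab r = a" "ominus M t r"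
      using Ht by auto
    have pr: "(Xs M (tgt r), Tr r) \<in> procs M" using procs_step[OF M Hp(1) r(2)] .
    have s0: "(Xs M (tgt r), Tr r) \<in> sem M V p"
    proof (rule ccontr)
      assume "(Xs M (tgt r), Tr r) \<notin> sem M V p"
      then have "(R,t) \<in> dia_nc M a (procs M - sem M V p)" using Hp(1) r pr unfolding dia_nc_def by blast
      then show False using Hp(2) by blast
    qed
    show "\<exists>g. win (moves M (BoxNC a p)) (eve_wins_final V) (eve_wins_inf (BoxNC a p)) c1 g"
      unfolding r(1) by (rule child_win[OF BoxNC.prems(1) pp]) (use BoxNC.IH pp BoxNC.prems s0 in auto)
  qed
  show ?case by (rule win_prepend_ex) (use all in \<open>auto intro: ewi_s1\<close>)
next
  case (BoxOt p)
  have pp: "pnf p" using pnf_BoxOt[OF BoxOt.prems(1)] .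
  obtain R t where Ht: "H = (R,t)" by (cases H)
  have Hp: "(R,t) \<in> procs M" "(R,t) \<notin> dia_ot M (procs M - sem M V p)" using BoxOt.prems(3) Ht by auto
  have all: "\<forall>c1\<in>moves M (BoxOt p) (H, BoxOt p).
     \<exists>g. win (moves M (BoxOt p)) (eve_wins_final V) (eve_wins_inf (BoxOt p)) c1 g"
  proof
    fix c1 assume "c1 \<in> moves M (BoxOt p) (H, BoxOt p)"
    then obtain N where r: "c1 = ((N, t), p)" "N \<in> calX M" "sqsub M N R"
      using Ht by auto
    have pr: "(N, t) \<in> procs M" using procs_ot[OF Hp(1) r(2)] .
    have s0: "(N, t) \<in> sem M V p"
    proof (rule ccontr)
      assume "(N, t) \<notin> sem M V p"
      then have "(R,t) \<in> dia_ot M (procs M - sem M V p)" using Hp(1) r pr unfolding dia_ot_def by blast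
      then show False using Hp(2) by blast
    qed
    show "\<exists>g. win (moves M (BoxOt p)) (eve_wins_final V) (eve_wins_inf (BoxOt p)) c1 g"
      unfolding r(1) by (rule child_win[OF BoxOt.prems(1) pp]) (use BoxOt.IH pp BoxOt.prems s0 in auto)
  qed
  show ?case by (rule win_prepend_ex) (use all in \<open>auto intro: ewi_s1\<close>)
next
  case (Mu Z p)
  have pp: "pnf p" using pnf_Mu[OF Mu.prems(1)] .
  have dP: "distinct (bvars (Mu Z p))" using Mu.prems(1) by (simp add: pnf_def)
  then have dp: "distinct (bvars p)" and Zp: "Z \<notin> set (bvars p)" by simp_all
  have nZ: "FNeg (FVar Z) \<notin> sub p" using Mu.prems(1) unfolding pnf_def by auto
  have nZx: "FNeg (FVar Z) \<notin> xsub p" using nZ unfolding xsub_def by auto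
  have body: "body (Mu Z p) Z = p" by (rule body_eq[OF dP]) simp
  define P where "P = {H \<in> procs M. \<exists>g. win (moves M (Mu Z p)) (eve_wins_final V)
      (eve_wins_inf (Mu Z p)) (H, FVar Z) g}"
  have VP: "\<forall>Y. (V(Z:=P)) Y \<subseteq> procs M" using Mu.prems(2) P_def by auto
  define T :: "('s,'a,'v) config set" where "T = {c. snd c = FVar Z}"
  define S :: "('s,'a,'v) config set" where "S = {c. snd c \<in> xsub p \<or> snd c = FVar Z}"
  have step: "sem M (V(Z:=P)) p \<subseteq> P"
  proof
    fix H' assume H': "H' \<in> sem M (V(Z:=P)) p"
    obtain \<sigma> where \<sigma>: "win (moves M p) (eve_wins_final (V(Z:=P))) (eve_wins_inf p) (H', p) \<sigma>"
      using Mu.IH[OF pp VP H'] by blast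
    define \<tau> where "\<tau> = (\<lambda>c. SOME g. win (moves M (Mu Z p)) (eve_wins_final V) (eve_wins_inf (Mu Z p)) c g)"
    have w1: "win (moves M (Mu Z p)) (eve_wins_final V) (eve_wins_inf (Mu Z p)) (H', p)
       (\<lambda>ps. case fsplit T ps of None \<Rightarrow> \<sigma> ps | Some s \<Rightarrow> \<tau> (hd s) s)"
    proof (rule win_switch[where S = S and mvA = "moves M p" and fwA = "eve_wins_final (V(Z:=P))"
          and iwA = "eve_wins_inf p"])
      show "(H', p) \<in> S" by (simp add: S_def xsub_def)
      show "moves M p c \<subseteq> S" if cS: "c \<in> S" for c
      proof (cases "snd c \<in> xsub p")
        case True then show ?thesis using moves_closed[OF dp True] unfolding S_def by blast
      next
        case False
        then have "snd c = FVar Z" using cS unfolding S_def by simp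
        then obtain H'' where "c = (H'', FVar Z)" by (cases c) simp
        then show ?thesis using Zp by simp
      qed
      show "moves M (Mu Z p) c = moves M p c" if "c \<in> S" "c \<notin> T" for c
      proof (rule moves_agree[OF dP dp])
        show "p \<in> sub (Mu Z p)" by simp
        fix Y assume "snd c = FVar Y" "Y \<in> set (bvars (Mu Z p))"
        then show "Y \<in> set (bvars p)" using that(2) unfolding T_def by auto
      qed
      show "moves M p c = {}" if "c \<in> S" and cT: "c \<in> T" for c
      proof -
        have "snd c = FVar Z" using cT unfolding T_def by simp
        then obtain H'' where "c = (H'', FVar Z)" by (cases c) simp
        then show ?thesis using Zp by simp
      qed
      show "win (moves M p) (eve_wins_final (V(Z := P))) (eve_wins_inf p) (H', p) \<sigma>" by (rule \<sigma>)
      show "eve_wins_final V c" if "c \<in> S" "c \<notin> T" "eve_wins_final (V(Z := P)) c" for c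
      proof -
        have "snd c \<noteq> FVar Z" using that(2) unfolding T_def by simp
        moreover have "snd c \<noteq> FNeg (FVar Z)" using that(1) nZx unfolding S_def by auto
        ultimately show ?thesis using that(3) ewf_upd by metis
      qed
      show "eve_wins_inf (Mu Z p) q" if "eve_wins_inf p q" for q by (rule ewi_mono[OF _ that]) simp
      show "eve_wins_inf (Mu Z p) q" if "eve_wins_inf (Mu Z p) (\<lambda>n. q (n + k))" for q k
        using that ewi_shift by blast
      show "win (moves M (Mu Z p)) (eve_wins_final V) (eve_wins_inf (Mu Z p)) c (\<tau> c)"
        if "c \<in> S" and cT: "c \<in> T" and fc: "eve_wins_final (V(Z := P)) c" for c
      proof -
        have "snd c = FVar Z" using cT unfolding T_def by simp
        then obtain H'' where c: "c = (H'', FVar Z)" by (cases c) simp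
        then have "H'' \<in> P" using fc by simp
        then have "\<exists>g. win (moves M (Mu Z p)) (eve_wins_final V) (eve_wins_inf (Mu Z p)) c g"
          unfolding P_def c by blast
        then show ?thesis unfolding \<tau>_def by (rule someI_ex)
      qed
    qed
    have "\<exists>g. win (moves M (Mu Z p)) (eve_wins_final V) (eve_wins_inf (Mu Z p)) (H', FVar Z) g"
    proof (rule win_prepend_ex)
      show "\<forall>c1\<in>moves M (Mu Z p) (H', FVar Z). \<exists>g. win (moves M (Mu Z p)) (eve_wins_final V)
          (eve_wins_inf (Mu Z p)) c1 g" using w1 body by auto
    qed (use body in \<open>auto intro: ewi_s1\<close>)
    moreover have "H' \<in> procs M" using sem_procs[OF VP] H' by blast
    ultimately show "H' \<in> P" unfolding P_def by blast
  qed
  have "sem M V (Mu Z p) \<subseteq> P"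
  proof -
    have "P \<in> {Q. Q \<subseteq> procs M \<and> sem M (V(Z := Q)) p \<subseteq> Q}" using step P_def by auto
    then show ?thesis by (simp only: sem.simps) (rule Inter_lower)
  qed
  then have "H \<in> P" using Mu.prems(3) by blast
  then have wH: "\<exists>g. win (moves M (Mu Z p)) (eve_wins_final V) (eve_wins_inf (Mu Z p)) (H, FVar Z) g"
    unfolding P_def by blast
  show ?case by (rule win_prepend_ex) (use wH in \<open>auto intro: ewi_s1\<close>)
next
  case (Nu Z p)
  have pp: "pnf p" using pnf_Nu[OF Nu.prems(1)] .
  have dP: "distinct (bvars (Nu Z p))" using Nu.prems(1) by (simp add: pnf_def)
  then have dp: "distinct (bvars p)" and Zp: "Z \<notin> set (bvars p)" by simp_all
  have nZ: "FNeg (FVar Z) \<notin> sub p" using Nu.prems(1) unfolding pnf_def by auto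
  have nZx: "FNeg (FVar Z) \<notin> xsub p" using nZ unfolding xsub_def by auto
  have nv: "neg_on_vars p" using Nu.prems(1) unfolding pnf_def by simp
  have body: "body (Nu Z p) Z = p" by (rule body_eq[OF dP]) simp
  define W where "W = sem M V (Nu Z p)"
  have Wp: "W \<subseteq> procs M" unfolding W_def by (rule sem_procs[OF Nu.prems(2)])
  have post: "W \<subseteq> sem M (V(Z:=W)) p"
  proof -
    define G where "G = (\<lambda>Q. procs M - sem M (V(Z := procs M - Q)) p)"
    define D where "D = \<Inter>{Q. Q \<subseteq> procs M \<and> G Q \<subseteq> Q}"
    have WD: "W = procs M - D" unfolding W_def D_def G_def by simp
    have GD: "G D \<subseteq> Q" if Q: "Q \<subseteq> procs M" "G Q \<subseteq> Q" for Q
    proof -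
      have "D \<subseteq> Q" unfolding D_def using Q by (intro Inter_lower) simp
      then have "procs M - Q \<subseteq> procs M - D" by blast
      then have "sem M (V(Z := procs M - Q)) p \<subseteq> sem M (V(Z := procs M - D)) p"
        by (rule sem_mono[OF nv nZ])
      then have "G D \<subseteq> G Q" unfolding G_def by blast
      then show ?thesis using Q(2) by blast
    qed
    have "G D \<subseteq> D" unfolding D_def[of] by (rule Inter_greatest) (use GD D_def in simp)
    then have "procs M - sem M (V(Z := W)) p \<subseteq> D" unfolding G_def WD .
    then show ?thesis using WD by blast
  qed
  have VW: "\<forall>Y. (V(Z:=W)) Y \<subseteq> procs M" using Nu.prems(2) Wp by auto
  define T :: "('s,'a,'v) config set" where "T = {c. snd c = FVar Z}"
  define S :: "('s,'a,'v) config set" where "S = {c. snd c \<in> xsub p \<or> snd c = FVar Z}"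
  define \<sigma> where "\<sigma> = (\<lambda>c::('s,'a,'v) config. SOME g. win (moves M p) (eve_wins_final (V(Z:=W))) (eve_wins_inf p) (fst c, p) g)"
  have wr: "win (moves M (Nu Z p)) (eve_wins_final V) (eve_wins_inf (Nu Z p)) (H, FVar Z)
     (\<lambda>ps. \<sigma> (the (fst (lsplit T ps))) (snd (lsplit T ps)))"
  proof (rule win_restart[where S = S and mvA = "moves M p" and fwA = "eve_wins_final (V(Z:=W))"
        and iwA = "eve_wins_inf p" and r = "\<lambda>c. (fst c, p)"])
    show "(H, FVar Z) \<in> S" by (simp add: S_def)
    show "(H, FVar Z) \<in> T" by (simp add: T_def)
    show "eve_wins_final (V(Z := W)) (H, FVar Z)" using Nu.prems(3) W_def by simp
    show "moves M p c \<subseteq> S" if cS: "c \<in> S" for c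
    proof (cases "snd c \<in> xsub p")
      case True then show ?thesis using moves_closed[OF dp True] unfolding S_def by blast
    next
      case False
      then have "snd c = FVar Z" using cS unfolding S_def by simp
      then obtain H'' where "c = (H'', FVar Z)" by (cases c) simp
      then show ?thesis using Zp by simp
    qed
    show "moves M (Nu Z p) c = moves M p c" if "c \<in> S" and cT: "c \<notin> T" for c
    proof (rule moves_agree[OF dP dp])
      show "p \<in> sub (Nu Z p)" by simp
      fix Y assume "snd c = FVar Y" "Y \<in> set (bvars (Nu Z p))"
      then show "Y \<in> set (bvars p)" using cT unfolding T_def by auto
    qed
    show "moves M (Nu Z p) c = {(fst c, p)} \<and> (fst c, p) \<in> S \<and> moves M p c = {} \<and> \<not> eve_pos c"
      if "c \<in> S" and cT: "c \<in> T" for c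
    proof -
      have "snd c = FVar Z" using cT unfolding T_def by simp
      then obtain H'' where c: "c = (H'', FVar Z)" by (cases c) simp
      show ?thesis using c Zp body by (simp add: S_def xsub_def)
    qed
    show "win (moves M p) (eve_wins_final (V(Z := W))) (eve_wins_inf p) (fst c, p) (\<sigma> c)"
      if "c \<in> S" and cT: "c \<in> T" and fc: "eve_wins_final (V(Z := W)) c" for c
    proof -
      have "snd c = FVar Z" using cT unfolding T_def by simp
      then obtain H'' where c: "c = (H'', FVar Z)" by (cases c) simp
      then have "H'' \<in> W" using fc by simp
      then have "H'' \<in> sem M (V(Z:=W)) p" using post by blast
      then have "\<exists>g. win (moves M p) (eve_wins_final (V(Z:=W))) (eve_wins_inf p) (H'', p) g"
        by (rule Nu.IH[OF pp VW])
      then show ?thesis unfolding \<sigma>_def c fst_conv by (rule someI_ex)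
    qed
    show "eve_wins_final V c" if cS: "c \<in> S" and cT: "c \<notin> T" and fc: "eve_wins_final (V(Z := W)) c" for c
    proof -
      have "snd c \<noteq> FVar Z" using cT unfolding T_def by simp
      moreover have "snd c \<noteq> FNeg (FVar Z)" using cS nZx unfolding S_def by auto
      ultimately show ?thesis using fc ewf_upd by metis
    qed
    show "eve_wins_inf (Nu Z p) q" if "eve_wins_inf p (\<lambda>n. q (n + k))" for q k
    proof -
      have "eve_wins_inf p q" using that ewi_shift by blast
      then show ?thesis by (rule ewi_mono[rotated]) simp
    qed
    show "eve_wins_inf (Nu Z p) q" if "infinite {i. q i \<in> T}" "\<And>i. q (Suc i) \<in> moves M (Nu Z p) (q i)" for q
    proof (rule ewi_nu[OF dP])
      show "infinite {i. snd (q i) = FVar Z}" using that(1) unfolding T_def by simp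
      show "q (Suc i) \<in> moves M (Nu Z p) (q i)" for i by (rule that(2))
    qed
  qed
  show ?case by (rule win_prepend_ex) (use wr in \<open>auto intro: ewi_s1\<close>)
qed


theorem theorem7:
  fixes M :: "('s,'a) tsi" and V :: "'v \<Rightarrow> ('s,'a) proc set" and \<phi> :: "('a,'v) tfl"
  assumes "is_tsi M" and "image_finite M"
    and "\<forall>Z. V Z \<subseteq> procs M"
    and "pnf \<phi>"
    and "H0 M \<in> sem M V \<phi>"
  shows "eve_wins_game M V (H0 M) \<phi>"
proof -
  obtain f where "win (moves M \<phi>) (eve_wins_final V) (eve_wins_inf \<phi>) (H0 M, \<phi>) f"
    using main[OF assms(1) assms(4) assms(3) assms(5)] by blast
  then show ?thesis unfolding eve_wins_game_def win_iff by blast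
qed

end
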